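(* Let $n\ge2$, $m\ge2$ be integers, let $\mathcal{V}=\mathcal{V}_1\otimes\dots\otimes\mathcal{V}_m$ be a tensor product of vector spaces over a field $\mathbb{F}$, and let $\{x_a : a\in[n]\}$ be a multiset of product tensors with $x_a=x_{a,1}\otimes\dots\otimes x_{a,m}$. For $S\subseteq[n]$ and $j\in[m]$ let $d_j^S=\dim\operatorname{span}\{x_{a,j}:a\in S\}$. Let $r\in \{0,1,\dots,n\}$ be an integer. Suppose that for every subset $S \subseteq [n]$ with $2\leq |S| \leq n$ it holds that $|S|+\min\{|S|,r\} \leq\sum_{j=1}^m (d_j^S-1)+1$. Then any non-zero linear combination of more than $r$ elements of $\{x_a : a \in [n]\}$ has tensor rank greater than $r$, and every tensor $v \in \operatorname{span}\{x_a : a \in [n]\}$ of tensor rank at most $r$ has a unique tensor rank decomposition into a linear combination of elements of $\{x_a : a \in [n]\}$.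
   Context: $[n]=\{1,\dots,n\}$. A product tensor is a non-zero tensor $z_1\otimes\dots\otimes z_m$, $z_j\in\mathcal{V}_j$. The tensor rank of $v$ is the minimum number of product tensors summing to $v$; a tensor rank decomposition is such a minimal sum. A decomposition $v=\sum_{a\in[n]}z_a$ into product tensors constitutes a unique tensor rank decomposition if for every $r'\le n$ and every multiset of product tensors $\{y_a:a\in[r']\}$ with $v=\sum_{a\in[r']}y_a$, it holds that $r'=n$ and $\{z_a\}=\{y_a\}$ as multisets. A "linear combination of $k$ elements" means a combination of $k$ of the $x_a$ with non-zero coefficients. *)

theory Defs
  imports Complex_Main "HOL-Library.Function_Algebras" "HOL-Library.Multiset"
begin

text \<open>A vector of the j-th factor space is a function 'b => 'f (every vector space over
'f embeds linearly into such a function space). A tensor in V_1 (x) ... (x) V_m is a function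
(nat => 'b) => 'f on index tuples; the product tensor z_1 (x) ... (x) z_m is the function
i |-> prod_{j in {1..m}} z_j (i j). (The natural map from the algebraic tensor product of
function spaces into the function space on the product index set is injective.)\<close>

definition vscale :: "'f::field \<Rightarrow> ('b \<Rightarrow> 'f) \<Rightarrow> ('b \<Rightarrow> 'f)" where
  "vscale c v = (\<lambda>b. c * v b)"

definition tscale :: "'f::field \<Rightarrow> ((nat \<Rightarrow> 'b) \<Rightarrow> 'f) \<Rightarrow> ((nat \<Rightarrow> 'b) \<Rightarrow> 'f)" where
  "tscale c t = (\<lambda>i. c * t i)"

definition ptensor :: "nat \<Rightarrow> (nat \<Rightarrow> 'b \<Rightarrow> 'f::field) \<Rightarrow> (nat \<Rightarrow> 'b) \<Rightarrow> 'f" where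
  "ptensor m z = (\<lambda>i. \<Prod>j\<in>{1..m}. z j (i j))"

definition product_tensor :: "nat \<Rightarrow> ((nat \<Rightarrow> 'b) \<Rightarrow> 'f::field) \<Rightarrow> bool" where
  "product_tensor m t \<longleftrightarrow> t \<noteq> 0 \<and> (\<exists>z. t = ptensor m z)"

definition tensor_rank :: "nat \<Rightarrow> ((nat \<Rightarrow> 'b) \<Rightarrow> 'f::field) \<Rightarrow> nat" where
  "tensor_rank m v = (LEAST r. \<exists>Y. size Y = r \<and> (\<forall>y\<in>#Y. product_tensor m y) \<and> sum_mset Y = v)"

definition unique_trd :: "nat \<Rightarrow> ((nat \<Rightarrow> 'b) \<Rightarrow> 'f::field) \<Rightarrow> ((nat \<Rightarrow> 'b) \<Rightarrow> 'f) multiset \<Rightarrow> bool" where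
  "unique_trd m v Z \<longleftrightarrow> (\<forall>z\<in>#Z. product_tensor m z) \<and> sum_mset Z = v \<and>
     (\<forall>Y. size Y \<le> size Z \<and> (\<forall>y\<in>#Y. product_tensor m y) \<and> sum_mset Y = v \<longrightarrow> Y = Z)"

definition fdim :: "('b \<Rightarrow> 'f::field) set \<Rightarrow> nat" where
  "fdim S = vector_space.dim vscale S"

end

theory Submission
  imports Defs
begin

global_interpretation vs: vector_space "vscale :: 'f::field \<Rightarrow> ('b \<Rightarrow> 'f) \<Rightarrow> ('b \<Rightarrow> 'f)"
  by unfold_locales (auto simp: vscale_def algebra_simps fun_eq_iff)

global_interpretation fs: vector_space "(*) :: 'f::field \<Rightarrow> 'f \<Rightarrow> 'f"
  by unfold_locales (auto simp: algebra_simps)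

global_interpretation vfp: vector_space_pair "vscale :: 'f::field \<Rightarrow> ('b \<Rightarrow> 'f) \<Rightarrow> ('b \<Rightarrow> 'f)" "(*) :: 'f::field \<Rightarrow> 'f \<Rightarrow> 'f"
  by unfold_locales

lemma tscale_vscale: "tscale = vscale" by (simp add: tscale_def vscale_def fun_eq_iff)

lemma sum_delta_scale:
  assumes "finite J" "a0 \<in> J"
  shows "(\<Sum>a\<in>J. vscale (if a = a0 then c else 0) (g a)) = vscale c (g a0)"
proof -
  have "(\<Sum>a\<in>J. vscale (if a = a0 then c else 0) (g a)) = (\<Sum>a\<in>J. if a = a0 then vscale c (g a) else 0)"
    by (rule sum.cong) auto
  also have "\<dots> = vscale c (g a0)" using assms by (simp add: sum.delta')
  finally show ?thesis .
qed

lemma span_fam: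
  assumes "finite J"
  shows "x \<in> vs.span (g ` J) \<longleftrightarrow> (\<exists>\<mu>. x = (\<Sum>a\<in>J. vscale (\<mu> a) (g a)))"
proof
  assume "x \<in> vs.span (g ` J)"
  then show "\<exists>\<mu>. x = (\<Sum>a\<in>J. vscale (\<mu> a) (g a))"
  proof (induct rule: vs.span_induct_alt)
    case base show ?case by (intro exI[of _ "\<lambda>_. 0"]) simp
  next
    case (step c y z)
    then obtain a0 where a0: "a0 \<in> J" "y = g a0" by auto
    from step obtain \<mu> where mu: "z = (\<Sum>a\<in>J. vscale (\<mu> a) (g a))" by auto
    have "(\<Sum>a\<in>J. vscale (\<mu> a + (if a = a0 then c else 0)) (g a))
        = (\<Sum>a\<in>J. vscale (\<mu> a) (g a)) + (\<Sum>a\<in>J. vscale (if a = a0 then c else 0) (g a))"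
      by (simp add: vs.scale_left_distrib sum.distrib)
    also have "\<dots> = vscale c y + z" using sum_delta_scale[OF assms a0(1)] a0 mu by (simp add: add.commute)
    finally show ?case by metis
  qed
next
  assume "\<exists>\<mu>. x = (\<Sum>a\<in>J. vscale (\<mu> a) (g a))"
  then obtain \<mu> where "x = (\<Sum>a\<in>J. vscale (\<mu> a) (g a))" by blast
  then show "x \<in> vs.span (g ` J)"
    by (simp add: vs.span_sum vs.span_scale vs.span_base)
qed

lemma dim_mono_fin:
  assumes "finite W" "V \<subseteq> vs.span W"
  shows "vs.dim V \<le> vs.dim W"
proof -
  obtain B where B: "B \<subseteq> W" "vs.independent B" "W \<subseteq> vs.span B" "card B = vs.dim W"
    using vs.basis_exists by blast
  have "V \<subseteq> vs.span B" using assms(2) B(3) vs.span_mono vs.span_span by (metis dual_order.trans)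
  moreover have "finite B" using B(1) assms(1) finite_subset by blast
  ultimately show ?thesis using vs.dim_le_card B(4) by metis
qed

lemma dim_union_le:
  assumes "finite A" "finite C"
  shows "vs.dim (A \<union> C) \<le> vs.dim A + card C"
proof -
  obtain B where B: "B \<subseteq> A" "vs.independent B" "A \<subseteq> vs.span B" "card B = vs.dim A"
    using vs.basis_exists by blast
  have fB: "finite B" using B(1) assms(1) finite_subset by blast
  have "A \<union> C \<subseteq> vs.span (B \<union> C)"
    using B(3) vs.span_mono[of B "B \<union> C"] vs.span_superset[of "B \<union> C"] by blast
  then have "vs.dim (A \<union> C) \<le> card (B \<union> C)" using vs.dim_le_card fB assms(2) by blast
  also have "\<dots> \<le> card B + card C" by (rule card_Un_le)
  finally show ?thesis using B(4) by simp
qed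

lemma card_le_dim_indep:
  assumes "finite V" "vs.independent S" "S \<subseteq> vs.span V"
  shows "card S \<le> vs.dim V"
proof -
  obtain B where B: "B \<subseteq> V" "vs.independent B" "V \<subseteq> vs.span B" "card B = vs.dim V"
    using vs.basis_exists by blast
  have fB: "finite B" using B(1) assms(1) finite_subset by blast
  have "S \<subseteq> vs.span B" using assms(3) B(3) vs.span_mono vs.span_span by (metis dual_order.trans)
  then show ?thesis using vs.independent_span_bound[OF fB assms(2)] B(4) by simp
qed

definition imod :: "('b \<Rightarrow> 'f::field) set \<Rightarrow> ('i \<Rightarrow> 'b \<Rightarrow> 'f) \<Rightarrow> 'i set \<Rightarrow> bool" where
  "imod A g J \<longleftrightarrow> (\<forall>\<nu>. (\<Sum>a\<in>J. vscale (\<nu> a) (g a)) \<in> vs.span A \<longrightarrow> (\<forall>a\<in>J. \<nu> a = 0))"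

lemma imod_notin:
  assumes "imod A g J" "finite J" "a \<in> J"
  shows "g a \<notin> vs.span A"
proof
  assume "g a \<in> vs.span A"
  moreover have "(\<Sum>b\<in>J. vscale (if b = a then 1 else 0) (g b)) = g a"
    using sum_delta_scale[OF assms(2,3), of 1 g] by simp
  ultimately have "(\<Sum>b\<in>J. vscale (if b = a then 1 else 0) (g b)) \<in> vs.span A"
    by simp
  then show False using assms(1,3) unfolding imod_def by fastforce
qed

lemma imod_inj:
  assumes "imod A g J" "finite J"
  shows "inj_on g J"
proof (rule inj_onI, rule ccontr)
  fix a a' assume a: "a \<in> J" "a' \<in> J" "g a = g a'" "a \<noteq> a'"
  have "(\<Sum>b\<in>J. vscale ((if b = a then 1 else 0) + (if b = a' then -1 else 0)) (g b))
     = (\<Sum>b\<in>J. vscale (if b = a then 1 else 0) (g b)) + (\<Sum>b\<in>J. vscale (if b = a' then -1 else 0) (g b))"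
    by (simp add: vs.scale_left_distrib sum.distrib)
  also have "\<dots> = g a + vscale (-1) (g a')"
    using sum_delta_scale[OF assms(2) a(1), of 1 g] sum_delta_scale[OF assms(2) a(2), of "-1" g] by simp
  also have "\<dots> = 0" using a(3) by (simp add: vs.scale_minus_left)
  finally have "(\<Sum>b\<in>J. vscale ((if b = a then 1 else 0) + (if b = a' then -1 else 0)) (g b)) \<in> vs.span A"
    by (simp add: vs.span_zero)
  then show False using assms(1) a unfolding imod_def by fastforce
qed

lemma imod_indep:
  assumes im: "imod A g J" and fJ: "finite J" and fA: "finite A"
    and B: "B \<subseteq> A" "vs.independent B"
  shows "vs.independent (B \<union> g ` J)" "B \<inter> g ` J = {}"
proof -
  show disj: "B \<inter> g ` J = {}"
    using imod_notin[OF im fJ] B(1) vs.span_superset by fastforce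
  have fB: "finite B" using B(1) fA finite_subset by blast
  have inj: "inj_on g J" by (rule imod_inj[OF im fJ])
  show "vs.independent (B \<union> g ` J)"
  proof (rule vs.independent_if_scalars_zero)
    show "finite (B \<union> g ` J)" using fB fJ by simp
  next
    fix f x assume sum0: "(\<Sum>x\<in>B \<union> g ` J. vscale (f x) x) = 0" and x: "x \<in> B \<union> g ` J"
    have u: "(\<Sum>x\<in>B \<union> g ` J. vscale (f x) x) = (\<Sum>x\<in>B. vscale (f x) x) + (\<Sum>x\<in>g ` J. vscale (f x) x)"
      by (rule sum.union_disjoint) (use fB fJ disj in auto)
    have r: "(\<Sum>x\<in>g ` J. vscale (f x) x) = (\<Sum>a\<in>J. vscale (f (g a)) (g a))"
      by (simp add: sum.reindex[OF inj])
    have "(\<Sum>x\<in>B. vscale (f x) x) + (\<Sum>a\<in>J. vscale (f (g a)) (g a)) = 0"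
      using sum0 unfolding u r .
    then have eq: "(\<Sum>a\<in>J. vscale (f (g a)) (g a)) = - (\<Sum>x\<in>B. vscale (f x) x)"
      using neg_eq_iff_add_eq_0[THEN iffD2] by metis
    have "(\<Sum>x\<in>B. vscale (f x) x) \<in> vs.span A"
      using B(1) by (intro vs.span_sum vs.span_scale vs.span_base) auto
    then have "(\<Sum>a\<in>J. vscale (f (g a)) (g a)) \<in> vs.span A"
      unfolding eq by (rule vs.span_neg)
    then have fz: "\<forall>a\<in>J. f (g a) = 0"
      using im[unfolded imod_def, THEN spec[of _ "\<lambda>a. f (g a)"]] by blast
    then have "(\<Sum>a\<in>J. vscale (f (g a)) (g a)) = 0" by simp
    then have sB: "(\<Sum>x\<in>B. vscale (f x) x) = 0" using eq by simp
    show "f x = 0"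
    proof (cases "x \<in> B")
      case True
      then show ?thesis using vs.independentD[OF B(2) fB subset_refl sB] by blast
    next
      case False
      then show ?thesis using x fz by auto
    qed
  qed
qed

lemma imod_dim:
  assumes im: "imod A g J" and fJ: "finite J" and fA: "finite A"
  shows "vs.dim A + card J \<le> vs.dim (A \<union> g ` J)"
proof -
  obtain B where B: "B \<subseteq> A" "vs.independent B" "A \<subseteq> vs.span B" "card B = vs.dim A"
    using vs.basis_exists by blast
  have fB: "finite B" using B(1) fA finite_subset by blast
  note I = imod_indep[OF im fJ fA B(1,2)]
  have "card (B \<union> g ` J) = card B + card (g ` J)"
    using fB fJ I(2) by (simp add: card_Un_disjoint)
  also have "card (g ` J) = card J" by (rule card_image[OF imod_inj[OF im fJ]])
  finally have c: "card (B \<union> g ` J) = vs.dim A + card J" using B(4) by simp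
  have "B \<union> g ` J \<subseteq> A \<union> g ` J" using B(1) by blast
  then have "B \<union> g ` J \<subseteq> vs.span (A \<union> g ` J)"
    using vs.span_superset[of "A \<union> g ` J"] by (rule order_trans)
  then have "card (B \<union> g ` J) \<le> vs.dim (A \<union> g ` J)"
    by (intro card_le_dim_indep[OF _ I(1)]) (use fA fJ in auto)
  then show ?thesis using c by simp
qed

lemma imod_functional:
  assumes im: "imod A g J" and fJ: "finite J" and fA: "finite A" and q: "q \<in> J"
  shows "\<exists>\<phi>. module_hom vscale (*) \<phi> \<and> (\<forall>x\<in>vs.span A. \<phi> x = 0)
            \<and> (\<forall>a\<in>J. \<phi> (g a) = (if a = q then 1 else 0))"
proof -
  obtain B where B: "B \<subseteq> A" "vs.independent B" "A \<subseteq> vs.span B" "card B = vs.dim A"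
    using vs.basis_exists by blast
  note I = imod_indep[OF im fJ fA B(1,2)]
  obtain \<phi> where phi: "Vector_Spaces.linear vscale (*) \<phi>"
     "\<forall>x\<in>B \<union> g ` J. \<phi> x = (if x = g q then 1 else 0)"
    using vfp.linear_independent_extend[OF I(1), of "\<lambda>x. if x = g q then 1 else 0"] by blast
  have mh: "module_hom vscale (*) \<phi>" using phi(1) by (simp add: module_hom_iff_linear)
  have "\<forall>x\<in>B. \<phi> x = 0" using phi(2) I(2) q by auto
  then have z: "\<forall>x\<in>vs.span B. \<phi> x = 0" using module_hom.eq_0_on_span[OF mh] by blast
  have "vs.span A \<subseteq> vs.span B" using vs.span_mono[OF B(3)] by (simp add: vs.span_span)
  then have "\<forall>x\<in>vs.span A. \<phi> x = 0" using z by blast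
  moreover have "\<forall>a\<in>J. \<phi> (g a) = (if a = q then 1 else 0)"
    using phi(2) imod_inj[OF im fJ] q by (auto simp: inj_on_def)
  ultimately show ?thesis using mh by blast
qed


lemma not_imod_dim:
  assumes nim: "\<not> imod A g J" and fJ: "finite J" and fA: "finite A"
  shows "vs.dim (A \<union> g ` J) + 1 \<le> vs.dim A + card J"
proof -
  obtain \<nu> a0 where nu: "(\<Sum>a\<in>J. vscale (\<nu> a) (g a)) \<in> vs.span A" "a0 \<in> J" "\<nu> a0 \<noteq> 0"
    using nim unfolding imod_def by blast
  let ?R = "A \<union> g ` (J - {a0})"
  have spA: "vs.span A \<subseteq> vs.span ?R" by (rule vs.span_mono) auto
  have "(\<Sum>a\<in>J. vscale (\<nu> a) (g a)) = vscale (\<nu> a0) (g a0) + (\<Sum>a\<in>J - {a0}. vscale (\<nu> a) (g a))"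
    by (rule sum.remove[OF fJ nu(2)])
  then have e: "vscale (\<nu> a0) (g a0) = (\<Sum>a\<in>J. vscale (\<nu> a) (g a)) - (\<Sum>a\<in>J - {a0}. vscale (\<nu> a) (g a))"
    by (simp add: eq_diff_eq)
  have "(\<Sum>a\<in>J - {a0}. vscale (\<nu> a) (g a)) \<in> vs.span ?R"
    by (intro vs.span_sum vs.span_scale vs.span_base) auto
  then have "vscale (\<nu> a0) (g a0) \<in> vs.span ?R"
    unfolding e using nu(1) spA by (intro vs.span_diff) auto
  then have "vscale (inverse (\<nu> a0)) (vscale (\<nu> a0) (g a0)) \<in> vs.span ?R" by (rule vs.span_scale)
  then have ga0: "g a0 \<in> vs.span ?R" using nu(3) by (simp add: vs.scale_scale)
  have "A \<union> g ` J \<subseteq> vs.span ?R"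
  proof
    fix x assume "x \<in> A \<union> g ` J"
    show "x \<in> vs.span ?R"
    proof (cases "x = g a0")
      case True then show ?thesis using ga0 by simp
    next
      case False
      then have "x \<in> ?R" using \<open>x \<in> A \<union> g ` J\<close> by auto
      then show ?thesis by (rule vs.span_base)
    qed
  qed
  then have d1: "vs.dim (A \<union> g ` J) \<le> vs.dim ?R" by (rule dim_mono_fin[rotated]) (use fA fJ in simp)
  have d2: "vs.dim ?R \<le> vs.dim A + card (g ` (J - {a0}))" by (rule dim_union_le) (use fA fJ in simp_all)
  have d3: "card (g ` (J - {a0})) \<le> card (J - {a0})" by (rule card_image_le) (use fJ in simp)
  have d4: "card (J - {a0}) = card J - 1" using nu(2) fJ by simp
  have "vs.dim (A \<union> g ` J) \<le> vs.dim A + (card J - 1)" using d1 d2 d3 d4 by linarith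
  moreover have "card J \<ge> 1" using nu(2) fJ by (metis One_nat_def Suc_leI card_gt_0_iff empty_iff)
  ultimately show ?thesis by linarith
qed

lemma sum_fun_apply: "(\<Sum>a\<in>A. F a) x = (\<Sum>a\<in>A. F a x)"
  by (induct A rule: infinite_finite_induct) auto

lemma vscale_apply: "vscale c v x = c * v x" by (simp add: vscale_def)

definition bt :: "nat \<Rightarrow> ((nat \<Rightarrow> 'b) \<Rightarrow> 'f::field) \<Rightarrow> ('b \<Rightarrow> 'f) \<Rightarrow> ((nat \<Rightarrow> 'b) \<Rightarrow> 'f)" where
  "bt k w u = (\<lambda>i. w i * u (i k))"

definition indk :: "nat \<Rightarrow> ((nat \<Rightarrow> 'b) \<Rightarrow> 'f) \<Rightarrow> bool" where
  "indk k w \<longleftrightarrow> (\<forall>i b. w (i(k := b)) = w i)"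

definition Phi :: "nat \<Rightarrow> (('b \<Rightarrow> 'f) \<Rightarrow> 'f) \<Rightarrow> ((nat \<Rightarrow> 'b) \<Rightarrow> 'f::field) \<Rightarrow> ((nat \<Rightarrow> 'b) \<Rightarrow> 'f)" where
  "Phi k \<phi> T = (\<lambda>i. \<phi> (\<lambda>b. T (i(k := b))))"

definition Psi :: "nat \<Rightarrow> (((nat \<Rightarrow> 'b) \<Rightarrow> 'f) \<Rightarrow> 'f) \<Rightarrow> ((nat \<Rightarrow> 'b) \<Rightarrow> 'f::field) \<Rightarrow> ('b \<Rightarrow> 'f)" where
  "Psi k \<psi> T = (\<lambda>b. \<psi> (\<lambda>i. T (i(k := b))))"

lemma ptensor_Suc: "ptensor (Suc m) z = bt (Suc m) (ptensor m z) (z (Suc m))"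
proof -
  have "{1..Suc m} = insert (Suc m) {1..m}" by (rule atLeastAtMostSuc_conv) simp
  then show ?thesis by (simp add: ptensor_def bt_def fun_eq_iff mult.commute)
qed

lemma indk_ptensor: "indk (Suc m) (ptensor m z)"
  unfolding indk_def ptensor_def by (auto intro!: prod.cong)

lemma ptensor_0: "ptensor 0 z = (\<lambda>i. 1)"
  by (simp add: ptensor_def)

lemma module_vscale: "module (vscale :: 'f::field \<Rightarrow> ('b \<Rightarrow> 'f) \<Rightarrow> _)"
  using vs.vector_space_axioms by (simp add: module_iff_vector_space)

lemma module_times: "module ((*) :: 'f::field \<Rightarrow> 'f \<Rightarrow> 'f)"
  using fs.vector_space_axioms by (simp add: module_iff_vector_space)

lemma Phi_hom:
  assumes "module_hom vscale (*) \<phi>"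
  shows "module_hom vscale vscale (Phi k \<phi>)"
proof -
  have a: "Phi k \<phi> (x + y) = Phi k \<phi> x + Phi k \<phi> y" for x y
  proof -
    have "Phi k \<phi> (x + y) = (\<lambda>i. \<phi> ((\<lambda>b. x (i(k := b))) + (\<lambda>b. y (i(k := b)))))"
      unfolding Phi_def by (simp add: plus_fun_def)
    also have "\<dots> = Phi k \<phi> x + Phi k \<phi> y"
      unfolding Phi_def using module_hom.add[OF assms] by (simp add: fun_eq_iff)
    finally show ?thesis .
  qed
  have s: "Phi k \<phi> (vscale c x) = vscale c (Phi k \<phi> x)" for c x
  proof -
    have "(\<lambda>b. (vscale c x) (i(k := b))) = vscale c (\<lambda>b. x (i(k := b)))" for i
      by (simp add: fun_eq_iff vscale_def)
    then show ?thesis unfolding Phi_def using module_hom.scale[OF assms] by (simp add: fun_eq_iff vscale_def)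
  qed
  show ?thesis using a s by (simp add: module_hom_iff module_vscale)
qed

lemma Psi_hom:
  assumes "module_hom vscale (*) \<psi>"
  shows "module_hom vscale vscale (Psi k \<psi>)"
proof -
  have a: "Psi k \<psi> (x + y) = Psi k \<psi> x + Psi k \<psi> y" for x y
  proof -
    have "Psi k \<psi> (x + y) = (\<lambda>b. \<psi> ((\<lambda>i. x (i(k := b))) + (\<lambda>i. y (i(k := b)))))"
      unfolding Psi_def by (simp add: plus_fun_def)
    also have "\<dots> = Psi k \<psi> x + Psi k \<psi> y"
      unfolding Psi_def using module_hom.add[OF assms] by (simp add: fun_eq_iff)
    finally show ?thesis .
  qed
  have s: "Psi k \<psi> (vscale c x) = vscale c (Psi k \<psi> x)" for c x
  proof -
    have "(\<lambda>i. (vscale c x) (i(k := b))) = vscale c (\<lambda>i. x (i(k := b)))" for b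
      by (simp add: fun_eq_iff vscale_def)
    then show ?thesis unfolding Psi_def using module_hom.scale[OF assms] by (simp add: fun_eq_iff vscale_def)
  qed
  show ?thesis using a s by (simp add: module_hom_iff module_vscale)
qed

lemma Phi_bt:
  assumes "indk k w" "module_hom vscale (*) \<phi>"
  shows "Phi k \<phi> (bt k w u) = vscale (\<phi> u) w"
proof -
  have h: "(\<lambda>b. bt k w u (i(k := b))) = vscale (w i) u" for i
    using assms(1) by (simp add: bt_def vscale_def fun_eq_iff indk_def)
  have "Phi k \<phi> (bt k w u) = (\<lambda>i. \<phi> (vscale (w i) u))" unfolding Phi_def h ..
  also have "\<dots> = (\<lambda>i. w i * \<phi> u)" using module_hom.scale[OF assms(2)] by simp
  finally show ?thesis by (simp add: vscale_def fun_eq_iff mult.commute)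
qed

lemma Psi_bt:
  assumes "indk k w" "module_hom vscale (*) \<psi>"
  shows "Psi k \<psi> (bt k w u) = vscale (\<psi> w) u"
proof -
  have h: "(\<lambda>i. bt k w u (i(k := b))) = vscale (u b) w" for b
    using assms(1) by (simp add: bt_def vscale_def fun_eq_iff indk_def mult.commute)
  have "Psi k \<psi> (bt k w u) = (\<lambda>b. \<psi> (vscale (u b) w))" unfolding Psi_def h ..
  also have "\<dots> = (\<lambda>b. u b * \<psi> w)" using module_hom.scale[OF assms(2)] by simp
  finally show ?thesis by (simp add: vscale_def fun_eq_iff mult.commute)
qed

definition splits :: "('i \<Rightarrow> 'x \<Rightarrow> 'f::field) \<Rightarrow> 'i set \<Rightarrow> bool" where
  "splits g I \<longleftrightarrow> (\<exists>I1. I1 \<subseteq> I \<and> I1 \<noteq> {} \<and> I1 \<noteq> I \<and> vs.span (g ` I1) \<inter> vs.span (g ` (I - I1)) = {0})"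

lemma min_rep:
  fixes z :: "'i \<Rightarrow> 'x \<Rightarrow> 'f::field"
  assumes fI: "finite I" and U: "U \<subseteq> I" "U \<noteq> {}" "U \<noteq> I" and ns: "\<not> splits z I"
  obtains P \<mu> where "P \<subseteq> I - U" "(\<Sum>a\<in>P. vscale (\<mu> a) (z a)) \<noteq> 0"
    "(\<Sum>a\<in>P. vscale (\<mu> a) (z a)) \<in> vs.span (z ` U)"
    "\<And>P' \<mu>'. P' \<subseteq> I - U \<Longrightarrow> (\<Sum>a\<in>P'. vscale (\<mu>' a) (z a)) \<noteq> 0 \<Longrightarrow>
        (\<Sum>a\<in>P'. vscale (\<mu>' a) (z a)) \<in> vs.span (z ` U) \<Longrightarrow> card P \<le> card P'"
proof -
  define good where "good P \<longleftrightarrow> P \<subseteq> I - U \<and> (\<exists>\<mu>. (\<Sum>a\<in>P. vscale (\<mu> a) (z a)) \<noteq> 0 \<and>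
        (\<Sum>a\<in>P. vscale (\<mu> a) (z a)) \<in> vs.span (z ` U))" for P
  have "vs.span (z ` U) \<inter> vs.span (z ` (I - U)) \<noteq> {0}"
    using ns U unfolding splits_def by blast
  moreover have "0 \<in> vs.span (z ` U) \<inter> vs.span (z ` (I - U))" by (simp add: vs.span_zero)
  ultimately obtain s where s: "s \<noteq> 0" "s \<in> vs.span (z ` U)" "s \<in> vs.span (z ` (I - U))" by blast
  then obtain \<mu> where "s = (\<Sum>a\<in>I - U. vscale (\<mu> a) (z a))"
    using span_fam[of "I - U" s z] fI by auto
  then have "good (I - U)" unfolding good_def using s by blast
  from ex_has_least_nat[of good, OF this, of card] obtain P where
    P: "good P" "\<And>P'. good P' \<Longrightarrow> card P \<le> card P'" by blast
  from P(1) obtain \<mu> where "P \<subseteq> I - U" "(\<Sum>a\<in>P. vscale (\<mu> a) (z a)) \<noteq> 0"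
    "(\<Sum>a\<in>P. vscale (\<mu> a) (z a)) \<in> vs.span (z ` U)" unfolding good_def by blast
  moreover have "\<And>P' \<mu>'. P' \<subseteq> I - U \<Longrightarrow> (\<Sum>a\<in>P'. vscale (\<mu>' a) (z a)) \<noteq> 0 \<Longrightarrow>
        (\<Sum>a\<in>P'. vscale (\<mu>' a) (z a)) \<in> vs.span (z ` U) \<Longrightarrow> card P \<le> card P'"
    using P(2) unfolding good_def by blast
  ultimately show ?thesis using that by blast
qed

lemma min_rep_props:
  fixes z :: "'i \<Rightarrow> 'x \<Rightarrow> 'f::field"
  assumes fI: "finite I"
    and P: "P \<subseteq> I - U" "(\<Sum>a\<in>P. vscale (\<mu> a) (z a)) \<noteq> 0"
    "(\<Sum>a\<in>P. vscale (\<mu> a) (z a)) \<in> vs.span (z ` U)"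
    and mn: "\<And>P' \<mu>'. P' \<subseteq> I - U \<Longrightarrow> (\<Sum>a\<in>P'. vscale (\<mu>' a) (z a)) \<noteq> 0 \<Longrightarrow>
        (\<Sum>a\<in>P'. vscale (\<mu>' a) (z a)) \<in> vs.span (z ` U) \<Longrightarrow> card P \<le> card P'"
  shows "\<forall>a\<in>P. \<mu> a \<noteq> 0" and "\<And>e. e \<in> P \<Longrightarrow> imod (z ` U) z (P - {e})"
proof -
  have fP: "finite P" using P(1) fI finite_subset by blast
  have drop: "(\<Sum>a\<in>P - {a0}. vscale (\<mu>' a) (z a)) = (\<Sum>a\<in>P. vscale (\<mu>' a) (z a))"
    if "a0 \<in> P" "\<mu>' a0 = 0" for a0 \<mu>'
    using sum.remove[OF fP that(1), of "\<lambda>a. vscale (\<mu>' a) (z a)"] that(2) by simp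
  have small: "card (P - {a0}) < card P" if "a0 \<in> P" for a0
    using fP that by (rule card_Diff1_less)
  show "\<forall>a\<in>P. \<mu> a \<noteq> 0"
  proof (rule ccontr)
    assume "\<not> (\<forall>a\<in>P. \<mu> a \<noteq> 0)"
    then obtain a0 where a0: "a0 \<in> P" "\<mu> a0 = 0" by blast
    have "card P \<le> card (P - {a0})"
      by (rule mn[of "P - {a0}" \<mu>]) (use drop[of a0 \<mu>, OF a0] P in auto)
    then show False using small[OF a0(1)] by simp
  qed
  fix e assume e: "e \<in> P"
  show "imod (z ` U) z (P - {e})"
  proof (rule ccontr)
    assume "\<not> imod (z ` U) z (P - {e})"
    then obtain \<nu> a0 where nu: "(\<Sum>a\<in>P - {e}. vscale (\<nu> a) (z a)) \<in> vs.span (z ` U)"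
      "a0 \<in> P - {e}" "\<nu> a0 \<noteq> 0" unfolding imod_def by blast
    show False
    proof (cases "(\<Sum>a\<in>P - {e}. vscale (\<nu> a) (z a)) = 0")
      case False
      have "card P \<le> card (P - {e})"
        by (rule mn[of "P - {e}" \<nu>]) (use False nu(1) P(1) in auto)
      then show False using small[OF e] by simp
    next
      case True
      define \<nu>' where "\<nu>' a = (if a = e then 0 else \<nu> a)" for a
      have "(\<Sum>a\<in>P. vscale (\<nu>' a) (z a)) = (\<Sum>a\<in>P - {e}. vscale (\<nu>' a) (z a))"
        using drop[of e \<nu>'] e by (simp add: \<nu>'_def)
      also have "\<dots> = (\<Sum>a\<in>P - {e}. vscale (\<nu> a) (z a))"
        by (rule sum.cong) (auto simp: \<nu>'_def)
      finally have t0: "(\<Sum>a\<in>P. vscale (\<nu>' a) (z a)) = 0" using True by simp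
      define c where "c = \<mu> a0 / \<nu> a0"
      define \<mu>' where "\<mu>' a = \<mu> a - c * \<nu>' a" for a
      have "(\<Sum>a\<in>P. vscale (\<mu>' a) (z a)) = (\<Sum>a\<in>P. vscale (\<mu> a) (z a) - vscale c (vscale (\<nu>' a) (z a)))"
        by (rule sum.cong) (auto simp: \<mu>'_def vs.scale_left_diff_distrib)
      also have "\<dots> = (\<Sum>a\<in>P. vscale (\<mu> a) (z a)) - vscale c (\<Sum>a\<in>P. vscale (\<nu>' a) (z a))"
        by (simp add: sum_subtractf vs.scale_sum_right)
      finally have eq: "(\<Sum>a\<in>P. vscale (\<mu>' a) (z a)) = (\<Sum>a\<in>P. vscale (\<mu> a) (z a))"
        using t0 by simp
      have a0P: "a0 \<in> P" "\<mu>' a0 = 0" using nu(2,3) by (auto simp: \<mu>'_def \<nu>'_def c_def)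
      have "card P \<le> card (P - {a0})"
        by (rule mn[of "P - {a0}" \<mu>']) (use drop[of a0 \<mu>', OF a0P] eq P in auto)
      then show False using small[OF a0P(1)] by simp
    qed
  qed
qed

lemma sum_split_delta:
  assumes fP: "finite P" and QP: "Q \<subseteq> P" and q: "q \<in> Q"
    and c: "\<And>a. a \<in> Q \<Longrightarrow> c a = (if a = q then d else 0)"
  shows "(\<Sum>a\<in>P. vscale (c a) (g a)) = vscale d (g q) + (\<Sum>a\<in>P - Q. vscale (c a) (g a))"
proof -
  have fQ: "finite Q" using fP QP finite_subset by blast
  have "(\<Sum>a\<in>P. vscale (c a) (g a)) = (\<Sum>a\<in>P - Q. vscale (c a) (g a)) + (\<Sum>a\<in>Q. vscale (c a) (g a))"
    by (rule sum.subset_diff[OF QP fP])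
  also have "(\<Sum>a\<in>Q. vscale (c a) (g a)) = (\<Sum>a\<in>Q. vscale (if a = q then d else 0) (g a))"
    by (rule sum.cong) (auto simp: c)
  also have "\<dots> = vscale d (g q)" by (rule sum_delta_scale[OF fQ q])
  finally show ?thesis by (metis add.commute)
qed

lemma hom_sum:
  assumes "module_hom vscale s2 F"
  shows "F (\<Sum>a\<in>P. vscale (\<mu> a) (x a)) = (\<Sum>a\<in>P. s2 (\<mu> a) (F (x a)))"
proof -
  have "F (\<Sum>a\<in>P. vscale (\<mu> a) (x a)) = (\<Sum>a\<in>P. F (vscale (\<mu> a) (x a)))"
    by (rule module_hom.sum[OF assms])
  also have "\<dots> = (\<Sum>a\<in>P. s2 (\<mu> a) (F (x a)))"
    by (rule sum.cong) (simp_all add: module_hom.scale[OF assms])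
  finally show ?thesis .
qed

lemma scale_inv_in_span:
  assumes "vscale c x \<in> vs.span S" "c \<noteq> 0"
  shows "x \<in> vs.span S"
proof -
  have "vscale (inverse c) (vscale c x) \<in> vs.span S" using assms(1) by (rule vs.span_scale)
  then show ?thesis using assms(2) by simp
qed

lemma m2_step:
  fixes z w :: "'i \<Rightarrow> (nat \<Rightarrow> 'b) \<Rightarrow> 'f::field" and u :: "'i \<Rightarrow> 'b \<Rightarrow> 'f"
  assumes fI: "finite I" and U: "U \<subseteq> I" "U \<noteq> {}" "U \<noteq> I" and ns: "\<not> splits z I"
    and zdef: "\<And>a. a \<in> I \<Longrightarrow> z a = bt k (w a) (u a)" and ind: "\<And>a. a \<in> I \<Longrightarrow> indk k (w a)"
  shows "\<exists>P. P \<subseteq> I - U \<and> P \<noteq> {} \<and>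
     vs.dim (z ` U) + card P \<le> vs.dim (z ` (U \<union> P)) + 1 \<and>
     vs.dim (u ` (U \<union> P)) + vs.dim (w ` (U \<union> P)) + 1 \<le> vs.dim (u ` U) + vs.dim (w ` U) + card P"
proof -
  obtain P \<mu> where P: "P \<subseteq> I - U" "(\<Sum>a\<in>P. vscale (\<mu> a) (z a)) \<noteq> 0"
    "(\<Sum>a\<in>P. vscale (\<mu> a) (z a)) \<in> vs.span (z ` U)"
    and mn: "\<And>P' \<mu>'. P' \<subseteq> I - U \<Longrightarrow> (\<Sum>a\<in>P'. vscale (\<mu>' a) (z a)) \<noteq> 0 \<Longrightarrow>
        (\<Sum>a\<in>P'. vscale (\<mu>' a) (z a)) \<in> vs.span (z ` U) \<Longrightarrow> card P \<le> card P'"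
    using min_rep[OF fI U ns] by blast
  have props1: "\<forall>a\<in>P. \<mu> a \<noteq> 0" by (rule min_rep_props(1)[OF fI P], rule mn)
  have props2: "imod (z ` U) z (P - {e})" if "e \<in> P" for e
    by (rule min_rep_props(2)[OF fI P _ that], rule mn)
  define s where "s = (\<Sum>a\<in>P. vscale (\<mu> a) (z a))"
  have s0: "s \<noteq> 0" and sU: "s \<in> vs.span (z ` U)" using P unfolding s_def by auto
  have fP: "finite P" using P(1) fI finite_subset by blast
  have fU: "finite U" using U(1) fI finite_subset by blast
  have PI: "P \<subseteq> I" using P(1) by blast
  have Pne: "P \<noteq> {}" using P(2) by auto
  then obtain e where e: "e \<in> P" by blast
  have zdim: "vs.dim (z ` U) + card P \<le> vs.dim (z ` (U \<union> P)) + 1"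
  proof -
    have "vs.dim (z ` U) + card (P - {e}) \<le> vs.dim (z ` U \<union> z ` (P - {e}))"
      by (rule imod_dim[OF props2[OF e]]) (use fP fU in simp_all)
    also have "\<dots> \<le> vs.dim (z ` (U \<union> P))"
    proof (rule dim_mono_fin)
      show "finite (z ` (U \<union> P))" using fP fU by simp
      have "z ` U \<union> z ` (P - {e}) \<subseteq> z ` (U \<union> P)" by blast
      then show "z ` U \<union> z ` (P - {e}) \<subseteq> vs.span (z ` (U \<union> P))"
        using vs.span_superset[of "z ` (U \<union> P)"] by (rule order_trans)
    qed
    finally show ?thesis using fP e by (simp add: card_Diff_singleton)
  qed
  define goodQ where "goodQ Q \<longleftrightarrow> Q \<subseteq> P \<and> imod (u ` U) u Q" for Q
  have g0: "goodQ {}" unfolding goodQ_def imod_def by simp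
  have gb: "\<forall>Q. goodQ Q \<longrightarrow> card Q < card P + 1"
  proof (intro allI impI)
    fix Q assume "goodQ Q" then have "Q \<subseteq> P" by (simp add: goodQ_def)
    then have "card Q \<le> card P" by (rule card_mono[OF fP])
    then show "card Q < card P + 1" by simp
  qed
  obtain Q where Q: "goodQ Q" and Qmax: "\<And>Q'. goodQ Q' \<Longrightarrow> card Q' \<le> card Q"
    using Lattices_Big.ex_has_greatest_nat[of goodQ "{}" card "card P + 1", OF g0 gb] by blast
  have QP: "Q \<subseteq> P" and imQ: "imod (u ` U) u Q" using Q unfolding goodQ_def by auto
  have fQ: "finite Q" using QP fP finite_subset by blast
  have uspan: "u a \<in> vs.span (u ` U \<union> u ` Q)" if a: "a \<in> P" for a
  proof (cases "a \<in> Q")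
    case True then show ?thesis by (intro vs.span_base) auto
  next
    case False
    have "\<not> goodQ (insert a Q)"
    proof
      assume "goodQ (insert a Q)"
      then have "card (insert a Q) \<le> card Q" by (rule Qmax)
      then show False using False fQ by simp
    qed
    then have "\<not> imod (u ` U) u (insert a Q)" using QP a unfolding goodQ_def by auto
    then obtain \<nu> a1 where nu: "(\<Sum>b\<in>insert a Q. vscale (\<nu> b) (u b)) \<in> vs.span (u ` U)"
      "a1 \<in> insert a Q" "\<nu> a1 \<noteq> 0" unfolding imod_def by blast
    have split: "(\<Sum>b\<in>insert a Q. vscale (\<nu> b) (u b)) = vscale (\<nu> a) (u a) + (\<Sum>b\<in>Q. vscale (\<nu> b) (u b))"
      using False fQ by simp
    have na: "\<nu> a \<noteq> 0"
    proof
      assume "\<nu> a = 0"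
      then have "(\<Sum>b\<in>Q. vscale (\<nu> b) (u b)) \<in> vs.span (u ` U)" using nu(1) split by simp
      then have "\<forall>b\<in>Q. \<nu> b = 0" using imQ[unfolded imod_def, THEN spec[of _ \<nu>]] by blast
      then show False using nu(2,3) \<open>\<nu> a = 0\<close> by auto
    qed
    have sp1: "vs.span (u ` U) \<subseteq> vs.span (u ` U \<union> u ` Q)" by (rule vs.span_mono) auto
    have sp2: "(\<Sum>b\<in>Q. vscale (\<nu> b) (u b)) \<in> vs.span (u ` U \<union> u ` Q)"
      by (intro vs.span_sum vs.span_scale vs.span_base) auto
    have "vscale (\<nu> a) (u a) = (\<Sum>b\<in>insert a Q. vscale (\<nu> b) (u b)) - (\<Sum>b\<in>Q. vscale (\<nu> b) (u b))"
      using split by simp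
    also have "\<dots> \<in> vs.span (u ` U \<union> u ` Q)"
      using nu(1) sp1 sp2 by (intro vs.span_diff) auto
    finally show ?thesis using na by (rule scale_inv_in_span)
  qed
  have udim: "vs.dim (u ` (U \<union> P)) \<le> vs.dim (u ` U) + card Q"
  proof -
    have "u ` (U \<union> P) \<subseteq> vs.span (u ` U \<union> u ` Q)"
    proof
      fix x assume "x \<in> u ` (U \<union> P)"
      then obtain a where a: "a \<in> U \<union> P" "x = u a" by blast
      show "x \<in> vs.span (u ` U \<union> u ` Q)"
      proof (cases "a \<in> U")
        case True then show ?thesis using a by (intro vs.span_base) auto
      next
        case False then show ?thesis using a uspan by auto
      qed
    qed
    then have "vs.dim (u ` (U \<union> P)) \<le> vs.dim (u ` U \<union> u ` Q)"
      by (rule dim_mono_fin[rotated]) (use fU fQ in simp)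
    also have "\<dots> \<le> vs.dim (u ` U) + card (u ` Q)" by (rule dim_union_le) (use fU fQ in simp_all)
    also have "card (u ` Q) \<le> card Q" using fQ by (rule card_image_le)
    finally show ?thesis by simp
  qed
  have "\<forall>q\<in>Q. \<exists>\<phi>. module_hom vscale (*) \<phi> \<and> (\<forall>x\<in>vs.span (u ` U). \<phi> x = 0)
            \<and> (\<forall>a\<in>Q. \<phi> (u a) = (if a = q then 1 else 0))"
    using imod_functional[OF imQ fQ] fU by simp
  from bchoice[OF this] obtain \<phi> where phi0: "\<forall>q\<in>Q. module_hom vscale (*) (\<phi> q) \<and> (\<forall>x\<in>vs.span (u ` U). \<phi> q x = 0)
            \<and> (\<forall>a\<in>Q. \<phi> q (u a) = (if a = q then 1 else 0))" ..
  have phi: "\<And>q. q \<in> Q \<Longrightarrow> module_hom vscale (*) (\<phi> q)"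
    "\<And>q x. q \<in> Q \<Longrightarrow> x \<in> vs.span (u ` U) \<Longrightarrow> \<phi> q x = 0"
    "\<And>q a. q \<in> Q \<Longrightarrow> a \<in> Q \<Longrightarrow> \<phi> q (u a) = (if a = q then 1 else 0)"
    using phi0 by auto
  have Phis: "(\<Sum>a\<in>P. vscale (\<mu> a * \<phi> q (u a)) (w a)) = 0" if q: "q \<in> Q" for q
  proof -
    note hom = Phi_hom[OF phi(1)[OF q], of k]
    have "Phi k (\<phi> q) s = (\<Sum>a\<in>P. vscale (\<mu> a) (Phi k (\<phi> q) (z a)))"
      unfolding s_def by (rule hom_sum[OF hom])
    also have "\<dots> = (\<Sum>a\<in>P. vscale (\<mu> a * \<phi> q (u a)) (w a))"
    proof (rule sum.cong)
      fix a assume "a \<in> P"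
      then have "a \<in> I" using PI by blast
      then show "vscale (\<mu> a) (Phi k (\<phi> q) (z a)) = vscale (\<mu> a * \<phi> q (u a)) (w a)"
        using Phi_bt[OF ind phi(1)[OF q]] zdef by simp
    qed simp
    finally have e1: "Phi k (\<phi> q) s = (\<Sum>a\<in>P. vscale (\<mu> a * \<phi> q (u a)) (w a))" .
    have "Phi k (\<phi> q) x = 0" if "x \<in> z ` U" for x
    proof -
      from that obtain b where b: "b \<in> U" "x = z b" by blast
      then have bI: "b \<in> I" using U by blast
      have "u b \<in> vs.span (u ` U)" using b by (intro vs.span_base) auto
      then have "\<phi> q (u b) = 0" using phi(2)[OF q] by blast
      then show ?thesis using b bI Phi_bt[OF ind[OF bI] phi(1)[OF q]] zdef[OF bI] by simp
    qed
    then have "Phi k (\<phi> q) s = 0" using module_hom.eq_0_on_span[OF hom _ sU] by blast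
    then show ?thesis using e1 by simp
  qed
  have wspan: "w q \<in> vs.span (w ` (P - Q))" if q: "q \<in> Q" for q
  proof -
    have "(\<Sum>a\<in>P. vscale (\<mu> a * \<phi> q (u a)) (w a)) = vscale (\<mu> q) (w q) + (\<Sum>a\<in>P - Q. vscale (\<mu> a * \<phi> q (u a)) (w a))"
      by (rule sum_split_delta[OF fP QP q]) (simp add: phi(3)[OF q])
    then have "vscale (\<mu> q) (w q) = - (\<Sum>a\<in>P - Q. vscale (\<mu> a * \<phi> q (u a)) (w a))"
      using Phis[OF q] by (metis add_eq_0_iff2)
    also have "\<dots> \<in> vs.span (w ` (P - Q))"
      by (intro vs.span_neg vs.span_sum vs.span_scale vs.span_base) auto
    finally have "vscale (\<mu> q) (w q) \<in> vs.span (w ` (P - Q))" .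
    then show ?thesis by (rule scale_inv_in_span) (use props1 QP q in auto)
  qed
  have wdim1: "vs.dim (w ` (U \<union> P)) \<le> vs.dim (w ` U \<union> w ` (P - Q))"
  proof (rule dim_mono_fin)
    show "finite (w ` U \<union> w ` (P - Q))" using fU fP by simp
    show "w ` (U \<union> P) \<subseteq> vs.span (w ` U \<union> w ` (P - Q))"
    proof
      fix x assume "x \<in> w ` (U \<union> P)"
      then obtain a where a: "a \<in> U \<union> P" "x = w a" by blast
      show "x \<in> vs.span (w ` U \<union> w ` (P - Q))"
      proof (cases "a \<in> Q")
        case True
        have "vs.span (w ` (P - Q)) \<subseteq> vs.span (w ` U \<union> w ` (P - Q))" by (rule vs.span_mono) auto
        then show ?thesis using wspan[OF True] a by auto
      next
        case False then show ?thesis using a by (intro vs.span_base) auto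
      qed
    qed
  qed
  have nim: "\<not> imod (w ` U) w (P - Q)"
  proof
    assume im: "imod (w ` U) w (P - Q)"
    have fPQ: "finite (P - Q)" using fP by simp
    have "\<forall>a\<in>P - Q. \<exists>\<psi>. module_hom vscale (*) \<psi> \<and> (\<forall>x\<in>vs.span (w ` U). \<psi> x = 0)
            \<and> (\<forall>b\<in>P - Q. \<psi> (w b) = (if b = a then 1 else 0))"
      using imod_functional[OF im fPQ] fU by simp
    from bchoice[OF this] obtain \<psi> where psi0: "\<forall>a\<in>P - Q. module_hom vscale (*) (\<psi> a) \<and> (\<forall>x\<in>vs.span (w ` U). \<psi> a x = 0)
            \<and> (\<forall>b\<in>P - Q. \<psi> a (w b) = (if b = a then 1 else 0))" ..
    have psi: "\<And>a. a \<in> P - Q \<Longrightarrow> module_hom vscale (*) (\<psi> a)"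
      "\<And>a x. a \<in> P - Q \<Longrightarrow> x \<in> vs.span (w ` U) \<Longrightarrow> \<psi> a x = 0"
      "\<And>a b. a \<in> P - Q \<Longrightarrow> b \<in> P - Q \<Longrightarrow> \<psi> a (w b) = (if b = a then 1 else 0)"
      using psi0 by auto
    have uQ: "u a \<in> vs.span (u ` Q)" if a: "a \<in> P - Q" for a
    proof -
      note hom = Psi_hom[OF psi(1)[OF a], of k]
      have "Psi k (\<psi> a) s = (\<Sum>b\<in>P. vscale (\<mu> b) (Psi k (\<psi> a) (z b)))"
        unfolding s_def by (rule hom_sum[OF hom])
      also have "\<dots> = (\<Sum>b\<in>P. vscale (\<mu> b * \<psi> a (w b)) (u b))"
      proof (rule sum.cong)
        fix b assume "b \<in> P"
        then have "b \<in> I" using PI by blast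
        then show "vscale (\<mu> b) (Psi k (\<psi> a) (z b)) = vscale (\<mu> b * \<psi> a (w b)) (u b)"
          using Psi_bt[OF ind psi(1)[OF a]] zdef by simp
      qed simp
      finally have e1: "Psi k (\<psi> a) s = (\<Sum>b\<in>P. vscale (\<mu> b * \<psi> a (w b)) (u b))" .
      have "Psi k (\<psi> a) x = 0" if "x \<in> z ` U" for x
      proof -
        from that obtain b where b: "b \<in> U" "x = z b" by blast
        then have bI: "b \<in> I" using U by blast
        have "w b \<in> vs.span (w ` U)" using b by (intro vs.span_base) auto
        then have "\<psi> a (w b) = 0" using psi(2)[OF a] by blast
        then show ?thesis using b bI Psi_bt[OF ind[OF bI] psi(1)[OF a]] zdef[OF bI] by simp
      qed
      then have "Psi k (\<psi> a) s = 0" using module_hom.eq_0_on_span[OF hom _ sU] by blast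
      then have z0: "(\<Sum>b\<in>P. vscale (\<mu> b * \<psi> a (w b)) (u b)) = 0" using e1 by simp
      have PQQ: "P - (P - Q) = Q" using QP by blast
      have "(\<Sum>b\<in>P. vscale (\<mu> b * \<psi> a (w b)) (u b)) = vscale (\<mu> a) (u a) + (\<Sum>b\<in>P - (P - Q). vscale (\<mu> b * \<psi> a (w b)) (u b))"
        by (rule sum_split_delta[OF fP _ a]) (auto simp: psi(3)[OF a])
      then have "vscale (\<mu> a) (u a) = - (\<Sum>b\<in>Q. vscale (\<mu> b * \<psi> a (w b)) (u b))"
        using z0 PQQ by (metis add_eq_0_iff2)
      also have "\<dots> \<in> vs.span (u ` Q)"
        by (intro vs.span_neg vs.span_sum vs.span_scale vs.span_base) auto
      finally have "vscale (\<mu> a) (u a) \<in> vs.span (u ` Q)" .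
      then show ?thesis by (rule scale_inv_in_span) (use props1 a in auto)
    qed
    have repr: "u b = (\<Sum>q\<in>Q. vscale (\<phi> q (u b)) (u q))" if b: "b \<in> P" for b
    proof -
      have "u b \<in> vs.span (u ` Q)"
      proof (cases "b \<in> Q")
        case True then show ?thesis by (intro vs.span_base) auto
      next
        case False then show ?thesis using uQ b by blast
      qed
      then obtain c where c: "u b = (\<Sum>q\<in>Q. vscale (c q) (u q))" using span_fam[OF fQ] by blast
      have cc: "\<phi> q' (u b) = c q'" if q': "q' \<in> Q" for q'
      proof -
        have "\<phi> q' (u b) = (\<Sum>q\<in>Q. c q * \<phi> q' (u q))" unfolding c by (rule hom_sum[OF phi(1)[OF q']])
        also have "\<dots> = (\<Sum>q\<in>Q. if q = q' then c q else 0)" by (rule sum.cong) (auto simp: phi(3)[OF q'])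
        also have "\<dots> = c q'" using fQ q' by (simp add: sum.delta)
        finally show ?thesis .
      qed
      have "(\<Sum>q\<in>Q. vscale (c q) (u q)) = (\<Sum>q\<in>Q. vscale (\<phi> q (u b)) (u q))"
        by (rule sum.cong) (simp_all add: cc)
      then show ?thesis using c by simp
    qed
    have "s i = 0" for i
    proof -
      have "s i = (\<Sum>b\<in>P. \<mu> b * (w b i * u b (i k)))"
        unfolding s_def sum_fun_apply vscale_apply
        by (rule sum.cong) (use zdef PI in \<open>auto simp: bt_def\<close>)
      also have "\<dots> = (\<Sum>b\<in>P. \<Sum>q\<in>Q. \<mu> b * \<phi> q (u b) * w b i * u q (i k))"
      proof (rule sum.cong)
        fix b assume b: "b \<in> P"
        have h: "u b (i k) = (\<Sum>q\<in>Q. \<phi> q (u b) * u q (i k))"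
          using arg_cong[OF repr[OF b], of "\<lambda>f. f (i k)"] by (simp only: sum_fun_apply vscale_apply)
        have "\<mu> b * (w b i * u b (i k)) = (\<mu> b * w b i) * (\<Sum>q\<in>Q. \<phi> q (u b) * u q (i k))"
          by (simp only: h mult.assoc)
        also have "\<dots> = (\<Sum>q\<in>Q. (\<mu> b * w b i) * (\<phi> q (u b) * u q (i k)))" by (rule sum_distrib_left)
        also have "\<dots> = (\<Sum>q\<in>Q. \<mu> b * \<phi> q (u b) * w b i * u q (i k))"
          by (rule sum.cong) (simp_all only: mult_ac)
        finally show "\<mu> b * (w b i * u b (i k)) = (\<Sum>q\<in>Q. \<mu> b * \<phi> q (u b) * w b i * u q (i k))" .
      qed simp
      also have "\<dots> = (\<Sum>q\<in>Q. \<Sum>b\<in>P. \<mu> b * \<phi> q (u b) * w b i * u q (i k))" by (rule sum.swap)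
      also have "\<dots> = (\<Sum>q\<in>Q. (\<Sum>b\<in>P. \<mu> b * \<phi> q (u b) * w b i) * u q (i k))"
        by (simp only: sum_distrib_right)
      also have "\<dots> = 0"
      proof (rule sum.neutral, rule ballI)
        fix q assume q: "q \<in> Q"
        have "(\<Sum>b\<in>P. vscale (\<mu> b * \<phi> q (u b)) (w b)) i = 0" using Phis[OF q] by simp
        then have "(\<Sum>b\<in>P. \<mu> b * \<phi> q (u b) * w b i) = 0" by (simp add: sum_fun_apply vscale_apply)
        then show "(\<Sum>b\<in>P. \<mu> b * \<phi> q (u b) * w b i) * u q (i k) = 0" by simp
      qed
      finally show ?thesis .
    qed
    then have "s = 0" by (simp add: fun_eq_iff)
    then show False using s0 by simp
  qed
  have wdim2: "vs.dim (w ` U \<union> w ` (P - Q)) + 1 \<le> vs.dim (w ` U) + card (P - Q)"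
    by (rule not_imod_dim[OF nim]) (use fP fU in simp_all)
  have cP: "card P = card Q + card (P - Q)"
  proof -
    have "card (P - Q) = card P - card Q" using fQ QP by (rule card_Diff_subset)
    moreover have "card Q \<le> card P" by (rule card_mono[OF fP QP])
    ultimately show ?thesis by linarith
  qed
  have "vs.dim (u ` (U \<union> P)) + vs.dim (w ` (U \<union> P)) + 1 \<le> vs.dim (u ` U) + vs.dim (w ` U) + card P"
    using udim wdim1 wdim2 cP by linarith
  then show ?thesis using P(1) Pne zdim by blast
qed

lemma dim_single_nz: "x \<noteq> 0 \<Longrightarrow> vs.dim {x} = 1"
  using vs.dim_eq_card_independent[of "{x}"] vs.dependent_single[of x] by simp

lemma dim_single_le: "vs.dim {x} \<le> 1"
  using vs.dim_le_card'[of "{x}"] by simp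

lemma m2:
  fixes z w :: "'i \<Rightarrow> (nat \<Rightarrow> 'b) \<Rightarrow> 'f::field" and u :: "'i \<Rightarrow> 'b \<Rightarrow> 'f"
  assumes fI: "finite I" and Ine: "I \<noteq> {}" and ns: "\<not> splits z I"
    and zdef: "\<And>a. a \<in> I \<Longrightarrow> z a = bt k (w a) (u a)" and ind: "\<And>a. a \<in> I \<Longrightarrow> indk k (w a)"
    and nz: "\<And>a. a \<in> I \<Longrightarrow> z a \<noteq> 0"
  shows "vs.dim (u ` I) + vs.dim (w ` I) \<le> vs.dim (z ` I) + 1"
proof -
  define Inv where "Inv U \<longleftrightarrow> vs.dim (u ` U) + vs.dim (w ` U) \<le> vs.dim (z ` U) + 1" for U
  have step: "\<And>U. card (I - U) = n \<Longrightarrow> U \<subseteq> I \<Longrightarrow> U \<noteq> {} \<Longrightarrow> Inv U \<Longrightarrow> Inv I" for n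
  proof (induction n rule: less_induct)
    case (less n U)
    show ?case
    proof (cases "U = I")
      case True then show ?thesis using less by simp
    next
      case False
      obtain P where P: "P \<subseteq> I - U" "P \<noteq> {}" "vs.dim (z ` U) + card P \<le> vs.dim (z ` (U \<union> P)) + 1"
        "vs.dim (u ` (U \<union> P)) + vs.dim (w ` (U \<union> P)) + 1 \<le> vs.dim (u ` U) + vs.dim (w ` U) + card P"
        using m2_step[OF fI less.prems(2,3) False ns zdef ind] by blast
      have inv: "Inv (U \<union> P)" using less.prems(4) P(3,4) unfolding Inv_def by linarith
      have "I - (U \<union> P) \<subset> I - U" using P(1,2) by blast
      then have lt: "card (I - (U \<union> P)) < n" using less.prems(1) fI
        by (metis finite_Diff psubset_card_mono)
      have "U \<union> P \<subseteq> I" "U \<union> P \<noteq> {}" using less.prems(2,3) P(1) by auto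
      then show ?thesis using less.IH[OF lt refl _ _ inv] by blast
    qed
  qed
  obtain a0 where a0: "a0 \<in> I" using Ine by blast
  have "Inv {a0}"
    unfolding Inv_def using dim_single_nz[OF nz[OF a0]] dim_single_le[of "u a0"] dim_single_le[of "w a0"]
    by simp
  then show ?thesis using step[OF refl, of "{a0}"] a0 unfolding Inv_def by auto
qed

lemma slice_sum:
  assumes zdef: "\<And>a. a \<in> J \<Longrightarrow> z a = bt k (w a) (u a)" and ind: "\<And>a. a \<in> J \<Longrightarrow> indk k (w a)"
  shows "(\<lambda>i'. (\<Sum>a\<in>J. vscale (\<gamma> a) (z a)) (i'(k := b))) = (\<Sum>a\<in>J. vscale (\<gamma> a * u a b) (w a))"
proof
  fix i'
  have "(\<Sum>a\<in>J. vscale (\<gamma> a) (z a)) (i'(k := b)) = (\<Sum>a\<in>J. \<gamma> a * (w a (i'(k := b)) * u a b))"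
    unfolding sum_fun_apply vscale_apply by (rule sum.cong) (simp_all add: zdef bt_def)
  also have "\<dots> = (\<Sum>a\<in>J. (\<gamma> a * u a b) * w a i')"
  proof (rule sum.cong)
    fix a assume "a \<in> J"
    then have "w a (i'(k := b)) = w a i'" using ind unfolding indk_def by blast
    then show "\<gamma> a * (w a (i'(k := b)) * u a b) = (\<gamma> a * u a b) * w a i'" by (simp only: mult_ac)
  qed simp
  also have "\<dots> = (\<Sum>a\<in>J. vscale (\<gamma> a * u a b) (w a)) i'"
    unfolding sum_fun_apply vscale_apply ..
  finally show "(\<Sum>a\<in>J. vscale (\<gamma> a) (z a)) (i'(k := b)) = (\<Sum>a\<in>J. vscale (\<gamma> a * u a b) (w a)) i'" .
qed

lemma nsplit_w:
  fixes z w :: "'i \<Rightarrow> (nat \<Rightarrow> 'b) \<Rightarrow> 'f::field" and u :: "'i \<Rightarrow> 'b \<Rightarrow> 'f"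
  assumes fI: "finite I" and ns: "\<not> splits z I"
    and zdef: "\<And>a. a \<in> I \<Longrightarrow> z a = bt k (w a) (u a)" and ind: "\<And>a. a \<in> I \<Longrightarrow> indk k (w a)"
  shows "\<not> splits w I"
proof
  assume "splits w I"
  then obtain I1 where I1: "I1 \<subseteq> I" "I1 \<noteq> {}" "I1 \<noteq> I"
    "vs.span (w ` I1) \<inter> vs.span (w ` (I - I1)) = {0}" unfolding splits_def by blast
  have f1: "finite I1" "finite (I - I1)" using I1(1) fI finite_subset by auto
  have zero: "s = 0" if s: "s \<in> vs.span (z ` I1)" "s \<in> vs.span (z ` (I - I1))" for s
  proof -
    obtain \<alpha> where al: "s = (\<Sum>a\<in>I1. vscale (\<alpha> a) (z a))" using s(1) span_fam[OF f1(1), of s z] by blast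
    obtain \<beta> where be: "s = (\<Sum>a\<in>I - I1. vscale (\<beta> a) (z a))" using s(2) span_fam[OF f1(2), of s z] by blast
    have "s i = 0" for i
    proof -
      define T where "T = (\<lambda>i'. s (i'(k := i k)))"
      have "T = (\<Sum>a\<in>I1. vscale (\<alpha> a * u a (i k)) (w a))"
        unfolding T_def al by (rule slice_sum) (use I1(1) zdef ind in auto)
      then have T1: "T \<in> vs.span (w ` I1)" unfolding span_fam[OF f1(1)]
        by (rule exI[of _ "\<lambda>a. \<alpha> a * u a (i k)"])
      have "T = (\<Sum>a\<in>I - I1. vscale (\<beta> a * u a (i k)) (w a))"
        unfolding T_def be by (rule slice_sum) (use zdef ind in auto)
      then have T2: "T \<in> vs.span (w ` (I - I1))" unfolding span_fam[OF f1(2)]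
        by (rule exI[of _ "\<lambda>a. \<beta> a * u a (i k)"])
      have "T \<in> vs.span (w ` I1) \<inter> vs.span (w ` (I - I1))" using T1 T2 by (rule IntI)
      then have "T = 0" unfolding I1(4) by simp
      then have "T i = 0" by simp
      then show ?thesis unfolding T_def by simp
    qed
    then show ?thesis by (simp add: fun_eq_iff)
  qed
  have "vs.span (z ` I1) \<inter> vs.span (z ` (I - I1)) = {0}"
    using zero vs.span_zero by blast
  then have "splits z I" using I1(1-3) unfolding splits_def by blast
  with ns show False ..
qed

definition gval :: "nat \<Rightarrow> ('i \<Rightarrow> nat \<Rightarrow> 'b \<Rightarrow> 'f::field) \<Rightarrow> 'i set \<Rightarrow> int" where
  "gval m f I = (\<Sum>j\<in>{1..m}. (int (vs.dim ((\<lambda>a. f a j) ` I)) - 1)) + 1"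

lemma ST:
  fixes f :: "'i \<Rightarrow> nat \<Rightarrow> 'b \<Rightarrow> 'f::field"
  shows "finite I \<Longrightarrow> I \<noteq> {} \<Longrightarrow> (\<forall>a\<in>I. ptensor m (f a) \<noteq> 0) \<Longrightarrow> \<not> splits (\<lambda>a. ptensor m (f a)) I
   \<Longrightarrow> gval m f I \<le> int (vs.dim ((\<lambda>a. ptensor m (f a)) ` I))"
proof (induction m)
  case 0
  have "(\<lambda>a. ptensor 0 (f a)) ` I = {\<lambda>i. 1}" using 0(2) by (auto simp: ptensor_0)
  moreover have "vs.dim {(\<lambda>i. 1) :: (nat \<Rightarrow> 'b) \<Rightarrow> 'f} = 1"
    by (rule dim_single_nz) (simp add: fun_eq_iff)
  ultimately show ?case by (simp add: gval_def)
next
  case (Suc m)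
  let ?z = "\<lambda>a. ptensor (Suc m) (f a)" and ?w = "\<lambda>a. ptensor m (f a)" and ?u = "\<lambda>a. f a (Suc m)"
  have zdef: "?z a = bt (Suc m) (?w a) (?u a)" for a by (rule ptensor_Suc)
  have ind: "indk (Suc m) (?w a)" for a by (rule indk_ptensor)
  have wnz: "\<forall>a\<in>I. ?w a \<noteq> 0"
  proof
    fix a assume "a \<in> I"
    then have "?z a \<noteq> 0" using Suc.prems(3) by blast
    then show "?w a \<noteq> 0" unfolding zdef by (auto simp: bt_def fun_eq_iff)
  qed
  have nsw: "\<not> splits ?w I" by (rule nsplit_w[OF Suc.prems(1) Suc.prems(4) zdef ind])
  have IH: "gval m f I \<le> int (vs.dim (?w ` I))" by (rule Suc.IH[OF Suc.prems(1,2) wnz nsw])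
  have M: "vs.dim (?u ` I) + vs.dim (?w ` I) \<le> vs.dim (?z ` I) + 1"
    by (rule m2[OF Suc.prems(1,2,4) zdef ind]) (use Suc.prems(3) in blast)
  have "{1..Suc m} = insert (Suc m) {1..m}" by (rule atLeastAtMostSuc_conv) simp
  then have "gval (Suc m) f I = gval m f I + (int (vs.dim (?u ` I)) - 1)"
    by (simp add: gval_def)
  then show ?case using IH M by linarith
qed

lemma good_partition:
  fixes f :: "'i \<Rightarrow> nat \<Rightarrow> 'b \<Rightarrow> 'f::field"
  assumes "finite I" "\<forall>a\<in>I. ptensor m (f a) \<noteq> 0"
  shows "\<exists>\<B>. finite \<B> \<and> (\<forall>B\<in>\<B>. B \<noteq> {} \<and> B \<subseteq> I \<and> gval m f B \<le> int (vs.dim ((\<lambda>a. ptensor m (f a)) ` B)))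
       \<and> (\<forall>a\<in>I. \<exists>B\<in>\<B>. a \<in> B) \<and> (\<forall>B\<in>\<B>. \<forall>B'\<in>\<B>. B \<noteq> B' \<longrightarrow> B \<inter> B' = {})
       \<and> (\<forall>\<mu>. (\<Sum>a\<in>I. vscale (\<mu> a) (ptensor m (f a))) = 0 \<longrightarrow> (\<forall>B\<in>\<B>. (\<Sum>a\<in>B. vscale (\<mu> a) (ptensor m (f a))) = 0))"
  using assms
proof (induction "card I" arbitrary: I rule: less_induct)
  case less
  let ?z = "\<lambda>a. ptensor m (f a)"
  show ?case
  proof (cases "I = {}")
    case True then show ?thesis by (intro exI[of _ "{}"]) auto
  next
    case Ine: False
    show ?thesis
    proof (cases "splits ?z I")
      case False
      have "gval m f I \<le> int (vs.dim (?z ` I))" by (rule ST[OF less.prems(1) Ine less.prems(2) False])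
      then show ?thesis using Ine by (intro exI[of _ "{I}"]) auto
    next
      case True
      then obtain I1 where I1: "I1 \<subseteq> I" "I1 \<noteq> {}" "I1 \<noteq> I"
        "vs.span (?z ` I1) \<inter> vs.span (?z ` (I - I1)) = {0}" unfolding splits_def by blast
      have c1: "card I1 < card I" using I1(1,3) less.prems(1) psubset_card_mono by blast
      have "I - I1 \<subset> I" using I1(1,2) by blast
      then have c2: "card (I - I1) < card I" using less.prems(1) psubset_card_mono by blast
      have f1: "finite I1" "finite (I - I1)" using I1(1) less.prems(1) finite_subset by auto
      have p1: "\<forall>a\<in>I1. ?z a \<noteq> 0" using less.prems(2) I1(1) by blast
      have p2: "\<forall>a\<in>I - I1. ?z a \<noteq> 0" using less.prems(2) by blast
      obtain B1 where B1: "finite B1" "\<forall>B\<in>B1. B \<noteq> {} \<and> B \<subseteq> I1 \<and> gval m f B \<le> int (vs.dim (?z ` B))"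
        "\<forall>a\<in>I1. \<exists>B\<in>B1. a \<in> B" "\<forall>B\<in>B1. \<forall>B'\<in>B1. B \<noteq> B' \<longrightarrow> B \<inter> B' = {}"
        "\<forall>\<mu>. (\<Sum>a\<in>I1. vscale (\<mu> a) (?z a)) = 0 \<longrightarrow> (\<forall>B\<in>B1. (\<Sum>a\<in>B. vscale (\<mu> a) (?z a)) = 0)"
        using less.hyps[OF c1 f1(1) p1] by (elim exE conjE) (rule that)
      obtain B2 where B2: "finite B2" "\<forall>B\<in>B2. B \<noteq> {} \<and> B \<subseteq> I - I1 \<and> gval m f B \<le> int (vs.dim (?z ` B))"
        "\<forall>a\<in>I - I1. \<exists>B\<in>B2. a \<in> B" "\<forall>B\<in>B2. \<forall>B'\<in>B2. B \<noteq> B' \<longrightarrow> B \<inter> B' = {}"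
        "\<forall>\<mu>. (\<Sum>a\<in>I - I1. vscale (\<mu> a) (?z a)) = 0 \<longrightarrow> (\<forall>B\<in>B2. (\<Sum>a\<in>B. vscale (\<mu> a) (?z a)) = 0)"
        using less.hyps[OF c2 f1(2) p2] by (elim exE conjE) (rule that)
      have rel: "(\<Sum>a\<in>I1. vscale (\<mu> a) (?z a)) = 0 \<and> (\<Sum>a\<in>I - I1. vscale (\<mu> a) (?z a)) = 0"
        if r: "(\<Sum>a\<in>I. vscale (\<mu> a) (?z a)) = 0" for \<mu>
      proof -
        have sp: "(\<Sum>a\<in>I. vscale (\<mu> a) (?z a)) = (\<Sum>a\<in>I - I1. vscale (\<mu> a) (?z a)) + (\<Sum>a\<in>I1. vscale (\<mu> a) (?z a))"
          by (rule sum.subset_diff[OF I1(1) less.prems(1)])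
        have "(\<Sum>a\<in>I - I1. vscale (\<mu> a) (?z a)) + (\<Sum>a\<in>I1. vscale (\<mu> a) (?z a)) = 0"
          using r unfolding sp .
        then have e: "(\<Sum>a\<in>I1. vscale (\<mu> a) (?z a)) = - (\<Sum>a\<in>I - I1. vscale (\<mu> a) (?z a))"
          by (simp only: add_eq_0_iff)
        have s1: "(\<Sum>a\<in>I1. vscale (\<mu> a) (?z a)) \<in> vs.span (?z ` I1)"
          by (intro vs.span_sum vs.span_scale vs.span_base) auto
        have "(\<Sum>a\<in>I - I1. vscale (\<mu> a) (?z a)) \<in> vs.span (?z ` (I - I1))"
          by (intro vs.span_sum vs.span_scale vs.span_base) auto
        then have s2: "(\<Sum>a\<in>I1. vscale (\<mu> a) (?z a)) \<in> vs.span (?z ` (I - I1))"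
          unfolding e by (rule vs.span_neg)
        have "(\<Sum>a\<in>I1. vscale (\<mu> a) (?z a)) \<in> vs.span (?z ` I1) \<inter> vs.span (?z ` (I - I1))"
          using s1 s2 by (rule IntI)
        then have z1: "(\<Sum>a\<in>I1. vscale (\<mu> a) (?z a)) = 0" unfolding I1(4) by simp
        then show ?thesis using e by simp
      qed
      show ?thesis
      proof (intro exI[of _ "B1 \<union> B2"] conjI)
        show "finite (B1 \<union> B2)" using B1(1) B2(1) by simp
        show "\<forall>B\<in>B1 \<union> B2. B \<noteq> {} \<and> B \<subseteq> I \<and> gval m f B \<le> int (vs.dim (?z ` B))"
          using B1(2) B2(2) I1(1) by blast
        show "\<forall>a\<in>I. \<exists>B\<in>B1 \<union> B2. a \<in> B" using B1(3) B2(3) by blast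
        show "\<forall>B\<in>B1 \<union> B2. \<forall>B'\<in>B1 \<union> B2. B \<noteq> B' \<longrightarrow> B \<inter> B' = {}"
        proof (intro ballI impI)
          fix B B' assume B: "B \<in> B1 \<union> B2" "B' \<in> B1 \<union> B2" "B \<noteq> B'"
          show "B \<inter> B' = {}"
          proof (cases "B \<in> B1")
            case True
            show ?thesis
            proof (cases "B' \<in> B1")
              case True then show ?thesis using B1(4) \<open>B \<in> B1\<close> B(3) by blast
            next
              case False then have "B' \<in> B2" using B by blast
              then show ?thesis using B1(2) B2(2) \<open>B \<in> B1\<close> by blast
            qed
          next
            case False then have BB2: "B \<in> B2" using B by blast
            show ?thesis
            proof (cases "B' \<in> B1")
              case True then show ?thesis using B1(2) B2(2) BB2 by blast
            next
              case False then have "B' \<in> B2" using B by blast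
              then show ?thesis using B2(4) BB2 B(3) by blast
            qed
          qed
        qed
        show "\<forall>\<mu>. (\<Sum>a\<in>I. vscale (\<mu> a) (?z a)) = 0 \<longrightarrow> (\<forall>B\<in>B1 \<union> B2. (\<Sum>a\<in>B. vscale (\<mu> a) (?z a)) = 0)"
          using rel B1(5) B2(5) by blast
      qed
    qed
  qed
qed

lemma dim_empty0: "vs.dim {} = 0"
  using vs.dim_eq_card_independent[OF vs.independent_empty] by simp

lemma rel_dim:
  fixes g :: "'i \<Rightarrow> 'x \<Rightarrow> 'f::field"
  assumes fB: "finite B" and Bne: "B \<noteq> {}" and r: "(\<Sum>i\<in>B. vscale (\<mu> i) (g i)) = 0"
    and nz: "\<forall>i\<in>B. \<mu> i \<noteq> 0"
  shows "vs.dim (g ` B) + 1 \<le> card B"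
proof -
  have "\<not> imod {} g B"
  proof
    assume "imod {} g B"
    then have "\<forall>i\<in>B. \<mu> i = 0" using r unfolding imod_def by (simp add: vs.span_zero)
    then show False using nz Bne by blast
  qed
  from not_imod_dim[OF this fB] show ?thesis by (simp add: dim_empty0)
qed

lemma card_part:
  assumes fP: "finite \<B>" and disj: "\<forall>B\<in>\<B>. \<forall>B'\<in>\<B>. B \<noteq> B' \<longrightarrow> B \<inter> B' = {}"
    and cov: "(\<Union>B\<in>\<B>. {a. g a \<in> B}) = S" and fS: "finite S"
  shows "card S = (\<Sum>B\<in>\<B>. card {a. g a \<in> B})"
proof -
  have "card (\<Union>B\<in>\<B>. {a. g a \<in> B}) = (\<Sum>B\<in>\<B>. card {a. g a \<in> B})"
  proof (rule card_UN_disjoint[OF fP])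
    show "\<forall>B\<in>\<B>. finite {a. g a \<in> B}"
    proof
      fix B assume "B \<in> \<B>"
      then have "{a. g a \<in> B} \<subseteq> S" unfolding cov[symmetric] by blast
      then show "finite {a. g a \<in> B}" using fS by (rule finite_subset)
    qed
    show "\<forall>B\<in>\<B>. \<forall>B'\<in>\<B>. B \<noteq> B' \<longrightarrow> {a. g a \<in> B} \<inter> {a. g a \<in> B'} = {}"
      using disj by blast
  qed
  then show ?thesis using cov by simp
qed

lemma fdim_img: "{x a j | a. a \<in> S} = (\<lambda>a. x a j) ` S" by auto

lemma key:
  fixes x :: "nat \<Rightarrow> nat \<Rightarrow> 'b \<Rightarrow> 'f::field" and ys :: "((nat \<Rightarrow> 'b) \<Rightarrow> 'f) list"
  assumes prod: "\<forall>a\<in>{1..n}. ptensor m (x a) \<noteq> 0"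
    and cond: "\<forall>S. S \<subseteq> {1..n} \<and> 2 \<le> card S \<longrightarrow> int (card S) + int (min (card S) r)
          \<le> (\<Sum>j\<in>{1..m}. (int (fdim {x a j | a. a \<in> S}) - 1)) + 1"
    and T: "T \<subseteq> {1..n}" and c: "\<forall>a\<in>T. c a \<noteq> 0"
    and ys: "\<forall>y\<in>set ys. product_tensor m y" and kr: "length ys \<le> r"
    and eq: "(\<Sum>a\<in>T. tscale (c a) (ptensor m (x a))) = sum_list ys"
  shows "card T \<le> length ys \<and> (card T = length ys \<longrightarrow>
           mset ys = image_mset (\<lambda>a. tscale (c a) (ptensor m (x a))) (mset_set T))"
proof -
  define k where "k = length ys"
  have "\<forall>b\<in>{0..<k}. \<exists>z. ys ! b = ptensor m z"
    using ys unfolding k_def product_tensor_def by (auto dest: nth_mem)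
  from bchoice[OF this] obtain zs where zs: "\<forall>b\<in>{0..<k}. ys ! b = ptensor m (zs b)" ..
  have ynz: "\<forall>b\<in>{0..<k}. ys ! b \<noteq> 0"
    using ys unfolding k_def product_tensor_def by (auto dest: nth_mem)
  define f :: "nat + nat \<Rightarrow> nat \<Rightarrow> 'b \<Rightarrow> 'f" where "f = case_sum x zs"
  define I where "I = Inl ` T \<union> Inr ` {0..<k}"
  define \<mu> :: "nat + nat \<Rightarrow> 'f" where "\<mu> = case_sum c (\<lambda>_. -1)"
  let ?z = "\<lambda>i. ptensor m (f i)"
  have fT: "finite T" using T finite_subset by blast
  have fI: "finite I" unfolding I_def using fT by simp
  have zI: "\<forall>i\<in>I. ?z i \<noteq> 0" using prod T ynz zs unfolding I_def f_def by auto
  have rel: "(\<Sum>i\<in>I. vscale (\<mu> i) (?z i)) = 0"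
  proof -
    have "(\<Sum>i\<in>I. vscale (\<mu> i) (?z i)) = (\<Sum>i\<in>Inl ` T. vscale (\<mu> i) (?z i)) + (\<Sum>i\<in>Inr ` {0..<k}. vscale (\<mu> i) (?z i))"
      unfolding I_def by (rule sum.union_disjoint) (use fT in auto)
    also have "(\<Sum>i\<in>Inl ` T. vscale (\<mu> i) (?z i)) = (\<Sum>a\<in>T. tscale (c a) (ptensor m (x a)))"
      by (simp add: sum.reindex \<mu>_def f_def tscale_vscale)
    also have "(\<Sum>i\<in>Inr ` {0..<k}. vscale (\<mu> i) (?z i)) = (\<Sum>b\<in>{0..<k}. - (ys ! b))"
      by (simp add: sum.reindex \<mu>_def f_def zs vs.scale_minus_left)
    also have "\<dots> = - sum_list ys" by (simp add: sum_list_sum_nth k_def sum_negf)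
    finally have "(\<Sum>i\<in>I. vscale (\<mu> i) (?z i)) = (\<Sum>a\<in>T. tscale (c a) (ptensor m (x a))) + - sum_list ys" .
    then show ?thesis unfolding eq by (simp only: add.right_inverse)
  qed
  obtain \<B> where Bf: "finite \<B>" and Bp: "\<forall>B\<in>\<B>. B \<noteq> {} \<and> B \<subseteq> I \<and> gval m f B \<le> int (vs.dim (?z ` B))"
    and Bc: "\<forall>i\<in>I. \<exists>B\<in>\<B>. i \<in> B" and Bd: "\<forall>B\<in>\<B>. \<forall>B'\<in>\<B>. B \<noteq> B' \<longrightarrow> B \<inter> B' = {}"
    and Br: "\<forall>\<mu>. (\<Sum>i\<in>I. vscale (\<mu> i) (?z i)) = 0 \<longrightarrow> (\<forall>B\<in>\<B>. (\<Sum>i\<in>B. vscale (\<mu> i) (?z i)) = 0)"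
    using good_partition[OF fI zI] by (elim exE conjE) (rule that)
  define Bx where "Bx B = {a. Inl a \<in> B}" for B :: "(nat + nat) set"
  define By where "By B = {b. Inr b \<in> B}" for B :: "(nat + nat) set"
  have blk: "B = Inl ` Bx B \<union> Inr ` By B" for B
  proof (rule set_eqI)
    fix i show "i \<in> B \<longleftrightarrow> i \<in> Inl ` Bx B \<union> Inr ` By B" by (cases i) (auto simp: Bx_def By_def)
  qed
  have BxT: "Bx B \<subseteq> T" and ByK: "By B \<subseteq> {0..<k}" if "B \<subseteq> I" for B
    using that unfolding I_def Bx_def By_def by auto
  have cardB: "card B = card (Bx B) + card (By B)" if BI: "B \<subseteq> I" for B
  proof -
    have f1: "finite (Bx B)" using BxT[OF BI] fT finite_subset by blast
    have f2: "finite (By B)" using ByK[OF BI] finite_subset by blast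
    have g1: "finite (Inl ` Bx B :: (nat + nat) set)" using f1 by simp
    have g2: "finite (Inr ` By B :: (nat + nat) set)" using f2 by simp
    have g3: "(Inl ` Bx B :: (nat + nat) set) \<inter> Inr ` By B = {}" by blast
    have "card (Inl ` Bx B \<union> Inr ` By B) = card (Inl ` Bx B :: (nat + nat) set) + card (Inr ` By B :: (nat + nat) set)"
      using card_Un_disjoint[OF g1 g2 g3] .
    also have "\<dots> = card (Bx B) + card (By B)" by (simp add: card_image)
    finally show ?thesis using blk[of B] by simp
  qed
  have PB: "card (Bx B) \<le> card (By B) \<and> (2 \<le> card (Bx B) \<longrightarrow> card (Bx B) < card (By B))"
    if B: "B \<in> \<B>" for B
  proof -
    have BI: "B \<subseteq> I" "B \<noteq> {}" and gB: "gval m f B \<le> int (vs.dim (?z ` B))" using Bp B by auto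
    have fB: "finite B" using BI fI finite_subset by blast
    have rB: "(\<Sum>i\<in>B. vscale (\<mu> i) (?z i)) = 0" using Br rel B by blast
    have munz: "\<forall>i\<in>B. \<mu> i \<noteq> 0" using BI(1) c unfolding I_def \<mu>_def by auto
    have dB: "vs.dim (?z ` B) + 1 \<le> card B" by (rule rel_dim[OF fB BI(2) rB munz])
    have fBx: "finite (Bx B)" using BxT[OF BI(1)] fT finite_subset by blast
    have fBy: "finite (By B)" using ByK[OF BI(1)] finite_subset by blast
    have cBy: "card (By B) \<le> r"
    proof -
      have "card (By B) \<le> card {0..<k}" by (rule card_mono[OF _ ByK[OF BI(1)]]) simp
      then show ?thesis using kr k_def by simp
    qed
    have gx: "gval m x (Bx B) \<le> gval m f B"
    proof -
      have dimj: "vs.dim ((\<lambda>a. x a j) ` Bx B) \<le> vs.dim ((\<lambda>i. f i j) ` B)" for j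
      proof (rule dim_mono_fin)
        show "finite ((\<lambda>i. f i j) ` B)" using fB by simp
        have "(\<lambda>a. x a j) ` Bx B \<subseteq> (\<lambda>i. f i j) ` B" unfolding Bx_def f_def by force
        then show "(\<lambda>a. x a j) ` Bx B \<subseteq> vs.span ((\<lambda>i. f i j) ` B)"
          using vs.span_superset[of "(\<lambda>i. f i j) ` B"] by (rule order_trans)
      qed
      have dj: "int (vs.dim ((\<lambda>a. x a j) ` Bx B)) - 1 \<le> int (vs.dim ((\<lambda>i. f i j) ` B)) - 1" for j
        using dimj[of j] by simp
      show ?thesis unfolding gval_def by (intro add_right_mono sum_mono dj)
    qed
    show ?thesis
    proof (cases "2 \<le> card (Bx B)")
      case True
      have "int (card (Bx B)) + int (min (card (Bx B)) r) \<le> gval m x (Bx B)"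
      proof -
        have "Bx B \<subseteq> {1..n}" using BxT[OF BI(1)] T by blast
        then show ?thesis using cond[rule_format, of "Bx B"] True unfolding gval_def fdim_def fdim_img by auto
      qed
      then have "int (card (Bx B)) + int (min (card (Bx B)) r) + 1 \<le> int (card (Bx B)) + int (card (By B))"
        using gx gB dB cardB[OF BI(1)] by linarith
      then have "min (card (Bx B)) r < card (By B)" by linarith
      then show ?thesis using cBy True by (auto simp: min_def split: if_splits)
    next
      case False
      show ?thesis
      proof (cases "Bx B = {}")
        case True then show ?thesis by simp
      next
        case Bxne: False
        then have c1: "card (Bx B) = 1" using False fBx
          by (metis One_nat_def Suc_1 card_gt_0_iff less_Suc_eq_le not_le le_antisym Suc_leI)
        have "By B \<noteq> {}"
        proof
          assume Bye: "By B = {}"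
          from c1 obtain a where a: "Bx B = {a}" by (rule card_1_singletonE)
          have "B = {Inl a}" using blk[of B] a Bye by simp
          then have "vscale (c a) (ptensor m (x a)) = 0" using rB unfolding \<mu>_def f_def by simp
          moreover have "a \<in> T" using a BxT[OF BI(1)] by blast
          ultimately show False using c prod T by auto
        qed
        then have "card (By B) \<ge> 1" using fBy by (simp add: Suc_le_eq card_gt_0_iff)
        then show ?thesis using c1 False by simp
      qed
    qed
  qed
  have cT: "card T = (\<Sum>B\<in>\<B>. card (Bx B))"
    unfolding Bx_def
  proof (rule card_part[OF Bf Bd _ fT])
    show "(\<Union>B\<in>\<B>. {a. Inl a \<in> B}) = T"
    proof
      show "(\<Union>B\<in>\<B>. {a. Inl a \<in> B}) \<subseteq> T" using Bp BxT unfolding Bx_def by blast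
      show "T \<subseteq> (\<Union>B\<in>\<B>. {a. Inl a \<in> B})"
      proof
        fix a assume "a \<in> T"
        then have "Inl a \<in> I" unfolding I_def by blast
        then obtain B where "B \<in> \<B>" "Inl a \<in> B" using Bc by blast
        then show "a \<in> (\<Union>B\<in>\<B>. {a. Inl a \<in> B})" by blast
      qed
    qed
  qed
  have cK: "k = (\<Sum>B\<in>\<B>. card (By B))"
  proof -
    have "card {0..<k} = (\<Sum>B\<in>\<B>. card (By B))"
      unfolding By_def
    proof (rule card_part[OF Bf Bd _ finite_atLeastLessThan])
      show "(\<Union>B\<in>\<B>. {b. Inr b \<in> B}) = {0..<k}"
      proof
        show "(\<Union>B\<in>\<B>. {b. Inr b \<in> B}) \<subseteq> {0..<k}" using Bp ByK unfolding By_def by blast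
        show "{0..<k} \<subseteq> (\<Union>B\<in>\<B>. {b. Inr b \<in> B})"
        proof
          fix b assume "b \<in> {0..<k}"
          then have "Inr b \<in> I" unfolding I_def by blast
          then obtain B where "B \<in> \<B>" "Inr b \<in> B" using Bc by blast
          then show "b \<in> (\<Union>B\<in>\<B>. {b. Inr b \<in> B})" by blast
        qed
      qed
    qed
    then show ?thesis by simp
  qed
  have le: "card T \<le> k" unfolding cT cK by (rule sum_mono) (use PB in blast)
  moreover have "card T = k \<longrightarrow> mset ys = image_mset (\<lambda>a. tscale (c a) (ptensor m (x a))) (mset_set T)"
  proof
    assume ceq: "card T = k"
    have eqB: "card (Bx B) = card (By B)" if B: "B \<in> \<B>" for B
    proof (rule ccontr)
      assume ne: "card (Bx B) \<noteq> card (By B)"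
      have "(\<Sum>B\<in>\<B>. card (Bx B)) < (\<Sum>B\<in>\<B>. card (By B))"
      proof (rule sum_strict_mono_ex1[OF Bf])
        show "\<forall>B\<in>\<B>. card (Bx B) \<le> card (By B)" using PB by blast
        have "card (Bx B) < card (By B)" using conjunct1[OF PB[OF B]] ne by simp
        then show "\<exists>B\<in>\<B>. card (Bx B) < card (By B)" using B by blast
      qed
      then show False using ceq cT cK by simp
    qed
    have pair: "\<exists>a b. Bx B = {a} \<and> By B = {b}" if B: "B \<in> \<B>" for B
    proof -
      have BI: "B \<subseteq> I" "B \<noteq> {}" using Bp B by auto
      have fBx: "finite (Bx B)" using BxT[OF BI(1)] fT finite_subset by blast
      have fBy: "finite (By B)" using ByK[OF BI(1)] finite_subset by blast
      have e: "card (Bx B) = card (By B)" by (rule eqB[OF B])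
      have n2: "\<not> 2 \<le> card (Bx B)" using PB[OF B] e by simp
      have "Bx B \<noteq> {}"
      proof
        assume "Bx B = {}"
        then have "By B = {}" using e fBy by simp
        then show False using blk[of B] \<open>Bx B = {}\<close> BI(2) by simp
      qed
      then have c1: "card (Bx B) = 1" using n2 fBx
        by (metis One_nat_def Suc_1 card_gt_0_iff less_Suc_eq_le not_le le_antisym Suc_leI)
      then have c2: "card (By B) = 1" using e by simp
      from c1 obtain a where "Bx B = {a}" by (rule card_1_singletonE)
      moreover from c2 obtain b where "By B = {b}" by (rule card_1_singletonE)
      ultimately show ?thesis by blast
    qed
    define R where "R a b \<longleftrightarrow> (\<exists>B\<in>\<B>. Inl a \<in> B \<and> Inr b \<in> B)" for a b
    have blkR: "B = {Inl a, Inr b}" if hB: "B \<in> \<B>" "Inl a \<in> B" "Inr b \<in> B" for B a b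
    proof -
      obtain a' b' where ab: "Bx B = {a'}" "By B = {b'}" using pair[OF hB(1)] by blast
      have "a' = a" "b' = b" using ab hB(2,3) unfolding Bx_def By_def by auto
      then show ?thesis using blk[of B] ab by auto
    qed
    have RT: "a \<in> T \<and> b \<in> {0..<k}" if "R a b" for a b
      using that Bp unfolding R_def I_def by blast
    have Rys: "ys ! b = tscale (c a) (ptensor m (x a))" if hR: "R a b" for a b
    proof -
      obtain B where B: "B \<in> \<B>" "Inl a \<in> B" "Inr b \<in> B" using hR R_def by blast
      have Be: "B = {Inl a, Inr b}" by (rule blkR[OF B])
      have bk: "b \<in> {0..<k}" using RT[OF hR] by blast
      have "(\<Sum>i\<in>B. vscale (\<mu> i) (?z i)) = 0" using Br rel B(1) by blast
      then have "vscale (c a) (ptensor m (x a)) + vscale (-1) (ys ! b) = 0"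
        unfolding Be using zs bk by (simp add: \<mu>_def f_def)
      then show ?thesis by (simp add: tscale_vscale vs.scale_minus_left)
    qed
    have Rex: "\<exists>b. R a b" if "a \<in> T" for a
    proof -
      have "Inl a \<in> I" using that unfolding I_def by blast
      then obtain B where B: "B \<in> \<B>" "Inl a \<in> B" using Bc by blast
      obtain a' b' where ab: "Bx B = {a'}" "By B = {b'}" using pair[OF B(1)] by blast
      have "Inr b' \<in> B" using ab(2) unfolding By_def by blast
      then show ?thesis using B unfolding R_def by blast
    qed
    have Runi: "b = b'" if hR: "R a b" "R a b'" for a b b'
    proof -
      obtain B where B: "B \<in> \<B>" "Inl a \<in> B" "Inr b \<in> B" using hR(1) R_def by blast
      obtain B' where B': "B' \<in> \<B>" "Inl a \<in> B'" "Inr b' \<in> B'" using hR(2) R_def by blast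
      have "B = B'" using Bd B B' by blast
      then show ?thesis using blkR[OF B] B' by auto
    qed
    have Rinj: "a = a'" if hR: "R a b" "R a' b" for a a' b
    proof -
      obtain B where B: "B \<in> \<B>" "Inl a \<in> B" "Inr b \<in> B" using hR(1) R_def by blast
      obtain B' where B': "B' \<in> \<B>" "Inl a' \<in> B'" "Inr b \<in> B'" using hR(2) R_def by blast
      have "B = B'" using Bd B B' by blast
      then show ?thesis using blkR[OF B] B' by auto
    qed
    have Rsurj: "\<exists>a. R a b" if "b \<in> {0..<k}" for b
    proof -
      have "Inr b \<in> I" using that unfolding I_def by blast
      then obtain B where B: "B \<in> \<B>" "Inr b \<in> B" using Bc by blast
      obtain a' b' where ab: "Bx B = {a'}" "By B = {b'}" using pair[OF B(1)] by blast
      have "Inl a' \<in> B" using ab(1) unfolding Bx_def by blast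
      then show ?thesis using B unfolding R_def by blast
    qed
    define \<sigma> where "\<sigma> a = (THE b. R a b)" for a
    have sR: "R a (\<sigma> a)" if "a \<in> T" for a
      unfolding \<sigma>_def using Rex[OF that] Runi by (metis theI)
    have inj: "inj_on \<sigma> T" using sR Rinj by (metis inj_onI)
    have img: "\<sigma> ` T = {0..<k}"
    proof
      show "\<sigma> ` T \<subseteq> {0..<k}" using sR RT by blast
      show "{0..<k} \<subseteq> \<sigma> ` T"
      proof
        fix b assume "b \<in> {0..<k}"
        then obtain a where a: "R a b" using Rsurj by blast
        then have aT: "a \<in> T" using RT by blast
        have "\<sigma> a = b" using Runi[OF sR[OF aT] a] .
        then show "b \<in> \<sigma> ` T" using aT by blast
      qed
    qed
    have "mset ys = mset (map (\<lambda>b. ys ! b) [0..<k])" unfolding k_def by (simp add: map_nth)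
    also have "\<dots> = image_mset (\<lambda>b. ys ! b) (mset_set {0..<k})" by simp
    also have "\<dots> = image_mset (\<lambda>b. ys ! b) (image_mset \<sigma> (mset_set T))"
      using image_mset_mset_set[OF inj] img by simp
    also have "\<dots> = image_mset (\<lambda>a. ys ! \<sigma> a) (mset_set T)" by (simp add: multiset.map_comp comp_def)
    also have "\<dots> = image_mset (\<lambda>a. tscale (c a) (ptensor m (x a))) (mset_set T)"
    proof (rule image_mset_cong)
      fix a assume "a \<in># mset_set T"
      then have "a \<in> T" using fT by simp
      then show "ys ! \<sigma> a = tscale (c a) (ptensor m (x a))" using Rys sR by blast
    qed
    finally show "mset ys = image_mset (\<lambda>a. tscale (c a) (ptensor m (x a))) (mset_set T)" .
  qed
  ultimately show ?thesis unfolding k_def by blast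
qed

lemma tscale_ptensor:
  assumes "1 \<le> m"
  shows "tscale c (ptensor m z) = ptensor m (z(1 := vscale c (z 1)))"
proof -
  have fin: "finite {1..m}" and one: "(1::nat) \<in> {1..m}" using assms by auto
  have "ptensor m (z(1 := vscale c (z 1))) i = c * ptensor m z i" for i
  proof -
    have "ptensor m (z(1 := vscale c (z 1))) i
        = (z(1 := vscale c (z 1))) 1 (i 1) * (\<Prod>j\<in>{1..m} - {1}. (z(1 := vscale c (z 1))) j (i j))"
      unfolding ptensor_def using prod.remove[OF fin one, of "\<lambda>j. (z(1 := vscale c (z 1))) j (i j)"] by simp
    also have "(\<Prod>j\<in>{1..m} - {1}. (z(1 := vscale c (z 1))) j (i j)) = (\<Prod>j\<in>{1..m} - {1}. z j (i j))"
      by (rule prod.cong) auto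
    also have "(z(1 := vscale c (z 1))) 1 (i 1) = c * z 1 (i 1)" by (simp add: vscale_def)
    also have "c * z 1 (i 1) * (\<Prod>j\<in>{1..m} - {1}. z j (i j)) = c * (z 1 (i 1) * (\<Prod>j\<in>{1..m} - {1}. z j (i j)))"
      by (rule mult.assoc)
    also have "z 1 (i 1) * (\<Prod>j\<in>{1..m} - {1}. z j (i j)) = ptensor m z i"
      unfolding ptensor_def using prod.remove[OF fin one, of "\<lambda>j. z j (i j)"] by simp
    finally show ?thesis .
  qed
  then show ?thesis by (simp add: tscale_def fun_eq_iff)
qed

lemma pt_prod:
  assumes "1 \<le> m" "c \<noteq> 0" "ptensor m z \<noteq> 0"
  shows "product_tensor m (tscale c (ptensor m z))"
  unfolding product_tensor_def
proof
  show "tscale c (ptensor m z) \<noteq> 0" using assms(2,3) by (simp add: tscale_vscale)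
  show "\<exists>z'. tscale c (ptensor m z) = ptensor m z'" using tscale_ptensor[OF assms(1)] by blast
qed

theorem corollary7p3:
  fixes n m r :: nat
    and x :: "nat \<Rightarrow> nat \<Rightarrow> 'b \<Rightarrow> 'f::field"
  assumes "n \<ge> 2" and "m \<ge> 2" and "r \<le> n"
    and prod: "\<forall>a\<in>{1..n}. product_tensor m (ptensor m (x a))"
    and cond: "\<forall>S. S \<subseteq> {1..n} \<and> 2 \<le> card S \<longrightarrow>
        int (card S) + int (min (card S) r)
          \<le> (\<Sum>j\<in>{1..m}. (int (fdim {x a j | a. a \<in> S}) - 1)) + 1"
  shows "(\<forall>T c v. T \<subseteq> {1..n} \<and> card T > r \<and> (\<forall>a\<in>T. c a \<noteq> 0)
            \<and> v = (\<Sum>a\<in>T. tscale (c a) (ptensor m (x a))) \<and> v \<noteq> 0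
            \<longrightarrow> tensor_rank m v > r)
       \<and> (\<forall>c v. v = (\<Sum>a\<in>{1..n}. tscale (c a) (ptensor m (x a))) \<and> tensor_rank m v \<le> r
            \<longrightarrow> (\<exists>T d. T \<subseteq> {1..n} \<and> (\<forall>a\<in>T. d a \<noteq> 0) \<and>
                   unique_trd m v (image_mset (\<lambda>a. tscale (d a) (ptensor m (x a))) (mset_set T))))"
proof -
  have m1: "1 \<le> m" using assms(2) by simp
  have prod': "\<forall>a\<in>{1..n}. ptensor m (x a) \<noteq> 0" using prod unfolding product_tensor_def by blast
  let ?Z = "\<lambda>T c. image_mset (\<lambda>a. tscale (c a) (ptensor m (x a))) (mset_set T)"
  have Zprops: "size (?Z T c) = card T \<and> (\<forall>y\<in>#?Z T c. product_tensor m y)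
      \<and> sum_mset (?Z T c) = (\<Sum>a\<in>T. tscale (c a) (ptensor m (x a)))"
    if T: "T \<subseteq> {1..n}" and c: "\<forall>a\<in>T. c a \<noteq> 0" for T c
  proof (intro conjI)
    have fT: "finite T" using T finite_subset by blast
    show "size (?Z T c) = card T" by simp
    show "\<forall>y\<in>#?Z T c. product_tensor m y"
    proof
      fix y assume "y \<in># ?Z T c"
      then obtain a where a: "a \<in> T" "y = tscale (c a) (ptensor m (x a))" using fT by auto
      then show "product_tensor m y" using pt_prod[OF m1] c prod' T by blast
    qed
    show "sum_mset (?Z T c) = (\<Sum>a\<in>T. tscale (c a) (ptensor m (x a)))"
      by (simp add: sum_unfold_sum_mset)
  qed
  have rk: "size Y0 = tensor_rank m v \<and> (\<forall>y\<in>#Y0. product_tensor m y) \<and> sum_mset Y0 = v"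
    if "Y0 = (SOME Y. size Y = tensor_rank m v \<and> (\<forall>y\<in>#Y. product_tensor m y) \<and> sum_mset Y = v)"
       "\<exists>Y. (\<forall>y\<in>#Y. product_tensor m y) \<and> sum_mset Y = v" for Y0 v
  proof -
    from that(2) obtain Y where "(\<forall>y\<in>#Y. product_tensor m y) \<and> sum_mset Y = v" by blast
    then have "\<exists>r. \<exists>Y. size Y = r \<and> (\<forall>y\<in>#Y. product_tensor m y) \<and> sum_mset Y = v" by blast
    then have "\<exists>Y. size Y = tensor_rank m v \<and> (\<forall>y\<in>#Y. product_tensor m y) \<and> sum_mset Y = v"
      unfolding tensor_rank_def by (rule LeastI_ex)
    then show ?thesis unfolding that(1) by (rule someI_ex)
  qed
  have keyY: "card T \<le> size Y \<and> (card T = size Y \<longrightarrow> Y = ?Z T c)"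
    if T: "T \<subseteq> {1..n}" and c: "\<forall>a\<in>T. c a \<noteq> 0" and Y: "\<forall>y\<in>#Y. product_tensor m y" "size Y \<le> r"
      "sum_mset Y = (\<Sum>a\<in>T. tscale (c a) (ptensor m (x a)))" for T c Y
  proof -
    obtain ys where ys: "mset ys = Y" using ex_mset by blast
    have "card T \<le> length ys \<and> (card T = length ys \<longrightarrow> mset ys = ?Z T c)"
    proof (rule key[OF prod' cond T c])
      show "\<forall>y\<in>set ys. product_tensor m y" using Y(1) ys by auto
      show "length ys \<le> r" using Y(2) ys by auto
      show "(\<Sum>a\<in>T. tscale (c a) (ptensor m (x a))) = sum_list ys"
        using Y(3) ys by (simp add: sum_mset_sum_list[symmetric])
    qed
    then show ?thesis using ys by auto
  qed
  show ?thesis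
  proof (intro conjI allI impI)
    fix T c v
    assume H: "T \<subseteq> {1..n} \<and> r < card T \<and> (\<forall>a\<in>T. c a \<noteq> 0)
            \<and> v = (\<Sum>a\<in>T. tscale (c a) (ptensor m (x a))) \<and> v \<noteq> 0"
    define Y0 where "Y0 = (SOME Y. size Y = tensor_rank m v \<and> (\<forall>y\<in>#Y. product_tensor m y) \<and> sum_mset Y = v)"
    have "\<exists>Y. (\<forall>y\<in>#Y. product_tensor m y) \<and> sum_mset Y = v" using Zprops[of T c] H by blast
    note Y0 = rk[OF Y0_def this]
    show "r < tensor_rank m v"
    proof (rule ccontr)
      assume "\<not> r < tensor_rank m v"
      then have "size Y0 \<le> r" using Y0 by simp
      then have "card T \<le> size Y0" using keyY[of T c Y0] H Y0 by blast
      then show False using H \<open>size Y0 \<le> r\<close> by simp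
    qed
  next
    fix c v
    assume H: "v = (\<Sum>a\<in>{1..n}. tscale (c a) (ptensor m (x a))) \<and> tensor_rank m v \<le> r"
    define T where "T = {a \<in> {1..n}. c a \<noteq> 0}"
    have T: "T \<subseteq> {1..n}" and cT: "\<forall>a\<in>T. c a \<noteq> 0" unfolding T_def by auto
    have vT: "v = (\<Sum>a\<in>T. tscale (c a) (ptensor m (x a)))"
      unfolding H[THEN conjunct1] T_def
      by (rule sum.mono_neutral_right) (auto simp: tscale_vscale)
    define Y0 where "Y0 = (SOME Y. size Y = tensor_rank m v \<and> (\<forall>y\<in>#Y. product_tensor m y) \<and> sum_mset Y = v)"
    have "\<exists>Y. (\<forall>y\<in>#Y. product_tensor m y) \<and> sum_mset Y = v" using Zprops[OF T cT] vT by blast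
    note Y0 = rk[OF Y0_def this]
    have s1: "size Y0 = tensor_rank m v" using Y0 by blast
    have s2: "tensor_rank m v \<le> r" using H by blast
    from s1 s2 have "size Y0 \<le> r" by (rule ord_eq_le_trans)
    then have cTr: "card T \<le> r" using keyY[OF T cT, of Y0] Y0 vT by auto
    have "unique_trd m v (?Z T c)"
      unfolding unique_trd_def
    proof (intro conjI allI impI)
      show "\<forall>z\<in>#?Z T c. product_tensor m z" using Zprops[OF T cT] by blast
      show "sum_mset (?Z T c) = v" using Zprops[OF T cT] vT by simp
      fix Y assume HY: "size Y \<le> size (?Z T c) \<and> (\<forall>y\<in>#Y. product_tensor m y) \<and> sum_mset Y = v"
      have sZ: "size (?Z T c) = card T" using Zprops[OF T cT] by blast
      have "size Y \<le> r" using HY sZ cTr by simp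
      then have "card T \<le> size Y \<and> (card T = size Y \<longrightarrow> Y = ?Z T c)"
        using keyY[OF T cT, of Y] HY vT by blast
      then show "Y = ?Z T c" using HY sZ by simp
    qed
    then show "\<exists>T d. T \<subseteq> {1..n} \<and> (\<forall>a\<in>T. d a \<noteq> 0) \<and> unique_trd m v (?Z T d)"
      using T cT by blast
  qed
qed

end
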